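(* Let $G=(V,E,\vec c)$ be a directed graph with non-negative vector edge costs $\vec c:E\to(\mathbb{R}^{\geq 0})^M$, let $v_s,v_d\in V$, and let $\vec h$ be a consistent heuristic. Run the algorithm RME-MOA* (described in the context) on this input with $\vec D=\vec 0$ and an arbitrary $\vec C\in(\mathbb{R}^{\geq 0})^M$. Then RME-MOA* computes a maximal cost-unique Pareto-optimal solution set: the set of paths represented by the labels in the returned set $\mathcal S$ is a maximal cost-unique Pareto-optimal solution set for the given graph, start vertex and destination vertex.
   Context: Setting. $G=(V,E,\vec c)$ is a directed graph, $\vec c:E\to(\mathbb{R}^{\geq 0})^M$ assigns to each edge a non-negative cost vector with $M$ objectives; $Succs(v)=\{v'\in V:(v,v')\in E\}$. A path $\pi(v_1,v_n)$ is a vertex sequence $v_1,\dots,v_n$ with $(v_i,v_{i+1})\in E$; its cost is $\vec g(\pi)=\sum_{i=1}^{n-1}\vec c(v_i,v_{i+1})$. For $\vec a,\vec b\in\mathbb{R}^M$: $\vec a$ dominates $\vec b$ ($\vec a\prec\vec b$) iff $a_i\le b_i$ for all $i$ and $\vec a\ne\vec b$; $\vec a$ weakly dominates $\vec b$ ($\vec a\preceq\vec b$) iff $a_i\le b_i$ for all $i$. A Pareto-optimal solution is a path $\pi^*$ from $v_s$ to $v_d$ such that no path $\pi'$ from $v_s$ to $v_d$ has $\vec g(\pi')\prec\vec g(\pi^* )$. A maximal cost-unique Pareto-optimal solution set is a maximal subset of the set of all Pareto-optimal solutions in which no two paths have the same cost. A heuristic $\vec h:V\to(\mathbb{R}^{\geq0})^M$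 is consistent iff $\vec h(v_d)=\vec 0$ and $\vec h(v)\le\vec c(v,v')+\vec h(v')$ componentwise for all $(v,v')\in E$. $<_{lex},\le_{lex},>_{lex},\min_{lex}$ denote lexicographic comparison/minimum of vectors; $\vec\infty$ is the all-infinity vector; $\vec h(v)<\vec D$ means strict inequality in every component. Labels. A label $l$ is an object carrying a vertex $v(l)$, vectors $\vec g(l),\vec f(l),\vec r(l)$, and a parent label $parent(l)$; it represents the path obtained by following parent pointers back to the start label. Distinct labels are distinct objects even with equal data. Data structures and procedures. OPEN is a priority queue of labels ordered lexicographically by $\vec r$. For each $v\in V$, $\alpha(v)$ is a set of labels, initially empty. $\mathcal S$ is a set of solution labels, initially empty. - FrontierCheck($l$): returns false if $l$ itself has previously been inserted into $\alpha(v(l))$; otherwise returns true iff some $l''\in\alpha(v(l))$ has $\vec g(l'')\preceq\vec g(l)$. - UpdateFrontier($l$): if $l$ has previously been inserted into $\alpha(v(l))$, does nothing; otherwise deletes from $\alpha(v(l))$ every $l''$ with $\vec g(l)\prec\vec g(l'')$ and inserts $l$. - SolutionCheck($l$): returns true iff some $s\in\mathcal S$ has $\vec g(s)\preceq\vec f(l)$. - UpdateSolution($\mathcal S,l$): deletes from $\mathcal S$ every $s$ with $\vec g(l)\prec\vec g(s)$ and inserts $l$. - ThresholdCheck($l$) (relative to the current threshold set $\mathcal T$): returns true iff some $\vec t\in\mathcal T$ has $\vec t\prec\vec f(l)$. - UpdateThreshold($\mathcal T_n,l$): deletes from $\mathcal T_n$ every vector dominated by $\vec f(l)$ and inserts $\vec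 f(l)$. Algorithm RME-MOA* (parameters $\vec C,\vec D\in(\mathbb{R}^{\geq0})^M$). 1. Create label $l_s$ with $v(l_s)=v_s$, $\vec g(l_s)=\vec 0$, $\vec f(l_s)=\vec r(l_s)=\vec h(v_s)$; insert into OPEN. 2. While OPEN is nonempty: remove the label $l$ with lexicographically smallest $\vec r$. (a) If FrontierCheck($l$) or SolutionCheck($l$) is true, discard $l$ and continue. (b) If $v(l)=v_d$: UpdateSolution($\mathcal S,l$) and continue. (c) UpdateFrontier($l$). (d) If $\vec h(v(l))<\vec D$: run the subroutine PIDMOA*($v(l),\vec g(l)$) below and continue. (e) Set $\vec r_{next}=\vec\infty$. For each $v'\in Succs(v(l))$: create $l'$ with $v(l')=v'$, $\vec g(l')=\vec g(l)+\vec c(v(l),v')$, $\vec f(l')=\vec r(l')=\vec g(l')+\vec h(v')$, $parent(l')=l$. If $\vec f(l')<_{lex}\vec r(l)$, skip $l'$. Else if FrontierCheck($l'$) or SolutionCheck($l'$) is true, skip $l'$. Else if $\vec f(l')>_{lex}\vec r(l)+\vec C$, set $\vec r_{next}=\min_{lex}(\vec r_{next},\vec f(l'))$ and skip $l'$. Otherwise insert $l'$ into OPEN. (f) If $\vec r_{next}\ne\vec\infty$: set $\vec r(l)=\vec r_{next}$ and reinsert $l$ into OPEN. 3. Return $\mathcal S$. Subroutine PIDMOA*($v_p,\vec g_p$): create label $l_p$ with $v(l_p)=v_p$, $\vec g(l_p)=\vec g_p$, $\vec f(l_p)=\vec g_p+\vec h(v_p)$; set $\mathcal T=\{\vec h(v_p)\}$.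 While $\mathcal T\ne\emptyset$: push $l_p$ on a LIFO stack OPEN_DFS, set $\mathcal T_n=\emptyset$; while OPEN_DFS is nonempty: pop $l$; if SolutionCheck($l$), continue; for each $v'\in Succs(v(l))$ create $l'$ with $v(l')=v'$, $\vec g(l')=\vec g(l)+\vec c(v(l),v')$, $\vec f(l')=\vec g(l')+\vec h(v')$, $parent(l')=l$; if SolutionCheck($l'$), skip; else if ThresholdCheck($l'$), do UpdateThreshold($\mathcal T_n,l'$) and skip; else if $v'=v_d$, do UpdateSolution($\mathcal S,l'$) and skip; else push $l'$ on OPEN_DFS. When OPEN_DFS is empty, set $\mathcal T=\mathcal T_n$. (With $\vec D=\vec 0$ this subroutine is never called, since $\vec h\ge\vec 0$.) *)

theory Defs
  imports Complex_Main
begin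

section \<open>Vectors in R^M, represented as functions nat => real (only components i < M matter)\<close>

type_synonym vec = "nat \<Rightarrow> real"

definition vadd :: "vec \<Rightarrow> vec \<Rightarrow> vec" where
  "vadd a b = (\<lambda>i. a i + b i)"

definition veq :: "nat \<Rightarrow> vec \<Rightarrow> vec \<Rightarrow> bool" where
  "veq M a b \<longleftrightarrow> (\<forall>i<M. a i = b i)"

definition vle :: "nat \<Rightarrow> vec \<Rightarrow> vec \<Rightarrow> bool" where
  "vle M a b \<longleftrightarrow> (\<forall>i<M. a i \<le> b i)"

definition vdom :: "nat \<Rightarrow> vec \<Rightarrow> vec \<Rightarrow> bool" where
  "vdom M a b \<longleftrightarrow> vle M a b \<and> \<not> veq M a b"

definition vlt :: "nat \<Rightarrow> vec \<Rightarrow> vec \<Rightarrow> bool" where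
  "vlt M a b \<longleftrightarrow> (\<forall>i<M. a i < b i)"

definition lex_less :: "nat \<Rightarrow> vec \<Rightarrow> vec \<Rightarrow> bool" where
  "lex_less M a b \<longleftrightarrow> (\<exists>k<M. (\<forall>i<k. a i = b i) \<and> a k < b k)"

definition lex_le :: "nat \<Rightarrow> vec \<Rightarrow> vec \<Rightarrow> bool" where
  "lex_le M a b \<longleftrightarrow> lex_less M a b \<or> veq M a b"

text \<open>lexicographic minimum; None encodes the all-infinity vector\<close>
fun lexmin :: "nat \<Rightarrow> vec option \<Rightarrow> vec \<Rightarrow> vec" where
  "lexmin M None f = f"
| "lexmin M (Some r) f = (if lex_less M f r then f else r)"

definition is_path :: "('v \<times> 'v) set \<Rightarrow> 'v list \<Rightarrow> bool" where
  "is_path E p \<longleftrightarrow> p \<noteq> [] \<and> (\<forall>i. Suc i < length p \<longrightarrow> (p ! i, p ! Suc i) \<in> E)"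

definition st_path :: "('v \<times> 'v) set \<Rightarrow> 'v \<Rightarrow> 'v \<Rightarrow> 'v list \<Rightarrow> bool" where
  "st_path E vs vd p \<longleftrightarrow> is_path E p \<and> hd p = vs \<and> last p = vd"

definition path_cost :: "('v \<Rightarrow> 'v \<Rightarrow> vec) \<Rightarrow> 'v list \<Rightarrow> vec" where
  "path_cost c p = (\<lambda>k. \<Sum>i<length p - 1. c (p ! i) (p ! Suc i) k)"

definition pareto_paths :: "('v \<times> 'v) set \<Rightarrow> ('v \<Rightarrow> 'v \<Rightarrow> vec) \<Rightarrow> nat \<Rightarrow> 'v \<Rightarrow> 'v \<Rightarrow> 'v list set" where
  "pareto_paths E c M vs vd =
     {p. st_path E vs vd p \<and>
         \<not> (\<exists>q. st_path E vs vd q \<and> vdom M (path_cost c q) (path_cost c p))}"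

definition cost_unique :: "('v \<Rightarrow> 'v \<Rightarrow> vec) \<Rightarrow> nat \<Rightarrow> 'v list set \<Rightarrow> bool" where
  "cost_unique c M P \<longleftrightarrow>
     (\<forall>p\<in>P. \<forall>q\<in>P. p \<noteq> q \<longrightarrow> \<not> veq M (path_cost c p) (path_cost c q))"

definition max_cost_unique_pareto_set ::
  "('v \<times> 'v) set \<Rightarrow> ('v \<Rightarrow> 'v \<Rightarrow> vec) \<Rightarrow> nat \<Rightarrow> 'v \<Rightarrow> 'v \<Rightarrow> 'v list set \<Rightarrow> bool" where
  "max_cost_unique_pareto_set E c M vs vd P \<longleftrightarrow>
     P \<subseteq> pareto_paths E c M vs vd \<and> cost_unique c M P \<and>
     (\<forall>Q. P \<subseteq> Q \<and> Q \<subseteq> pareto_paths E c M vs vd \<and> cost_unique c M Q \<longrightarrow> Q = P)"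

definition consistent_heuristic ::
  "'v set \<Rightarrow> ('v \<times> 'v) set \<Rightarrow> ('v \<Rightarrow> 'v \<Rightarrow> vec) \<Rightarrow> nat \<Rightarrow> 'v \<Rightarrow> ('v \<Rightarrow> vec) \<Rightarrow> bool" where
  "consistent_heuristic V E c M vd h \<longleftrightarrow>
     (\<forall>v\<in>V. \<forall>i<M. 0 \<le> h v i) \<and>
     (\<forall>i<M. h vd i = 0) \<and>
     (\<forall>(v, v')\<in>E. \<forall>i<M. h v i \<le> c v v' i + h v' i)"

text \<open>Labels are objects identified by a natural-number id; the store maps ids to label data.\<close>
record 'v lab =
  lv :: 'v
  lg :: vec
  lf :: vec
  lr :: vec
  lpar :: "nat option"

datatype 'v mode =
    Main
  | Exp nat "'v list" "vec option"    \<comment> \<open>expanding label, remaining successors, r_next (None = infinity)\<close>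
  | PidT nat "vec set"                \<comment> \<open>PIDMOA* outer loop: l_p, threshold set T\<close>
  | PidIn nat "vec set" "vec set" "nat list"   \<comment> \<open>l_p, T, T_n, OPEN_DFS stack\<close>
  | PidE nat "vec set" "vec set" "nat list" nat "'v list"  \<comment> \<open>... popped label, remaining successors\<close>
  | Done

record 'v rstate =
  store :: "nat \<Rightarrow> 'v lab"
  fresh :: nat
  opn :: "nat set"
  alpha :: "'v \<Rightarrow> nat set"
  hist :: "nat set"           \<comment> \<open>labels ever inserted into their frontier set alpha\<close>
  sol :: "nat set"
  mode :: "'v mode"

definition frontier_check :: "nat \<Rightarrow> 'v rstate \<Rightarrow> nat \<Rightarrow> bool" where
  "frontier_check M s l \<longleftrightarrow> l \<notin> hist s \<and>
     (\<exists>l2\<in>alpha s (lv (store s l)). vle M (lg (store s l2)) (lg (store s l)))"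

definition update_frontier :: "nat \<Rightarrow> 'v rstate \<Rightarrow> nat \<Rightarrow> 'v rstate" where
  "update_frontier M s l =
     (if l \<in> hist s then s
      else (let v = lv (store s l) in
        s\<lparr>alpha := (alpha s)(v := {l2 \<in> alpha s v. \<not> vdom M (lg (store s l)) (lg (store s l2))} \<union> {l}),
          hist := insert l (hist s)\<rparr>))"

definition sol_check :: "nat \<Rightarrow> 'v rstate \<Rightarrow> nat \<Rightarrow> bool" where
  "sol_check M s l \<longleftrightarrow> (\<exists>x\<in>sol s. vle M (lg (store s x)) (lf (store s l)))"

definition update_sol :: "nat \<Rightarrow> 'v rstate \<Rightarrow> nat \<Rightarrow> nat set" where
  "update_sol M s l = {x \<in> sol s. \<not> vdom M (lg (store s l)) (lg (store s x))} \<union> {l}"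

definition threshold_check :: "nat \<Rightarrow> vec set \<Rightarrow> vec \<Rightarrow> bool" where
  "threshold_check M T f \<longleftrightarrow> (\<exists>t\<in>T. vdom M t f)"

definition update_threshold :: "nat \<Rightarrow> vec set \<Rightarrow> vec \<Rightarrow> vec set" where
  "update_threshold M Tn f = {t \<in> Tn. \<not> vdom M f t} \<union> {f}"

definition add_label :: "'v rstate \<Rightarrow> 'v lab \<Rightarrow> 'v rstate" where
  "add_label s x = s\<lparr>store := (store s)(fresh s := x), fresh := Suc (fresh s)\<rparr>"

definition child :: "('v \<Rightarrow> 'v \<Rightarrow> vec) \<Rightarrow> ('v \<Rightarrow> vec) \<Rightarrow> 'v rstate \<Rightarrow> nat \<Rightarrow> 'v \<Rightarrow> 'v lab" where
  "child c h s l v' =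
     (let L = store s l; g' = vadd (lg L) (c (lv L) v'); f' = vadd g' (h v') in
      \<lparr>lv = v', lg = g', lf = f', lr = f', lpar = Some l\<rparr>)"

definition rme_init :: "('v \<Rightarrow> vec) \<Rightarrow> 'v \<Rightarrow> 'v rstate" where
  "rme_init h vs =
     \<lparr>store = (\<lambda>_. \<lparr>lv = vs, lg = (\<lambda>_. 0), lf = h vs, lr = h vs, lpar = None\<rparr>),
      fresh = 1, opn = {0}, alpha = (\<lambda>_. {}), hist = {}, sol = {}, mode = Main\<rparr>"

text \<open>Small-step semantics of RME-MOA* (including the subroutine PIDMOA*).
  Nondeterminism: tie-breaking in OPEN and the order in which successors are enumerated.\<close>
inductive rme_step ::
  "('v \<times> 'v) set \<Rightarrow> ('v \<Rightarrow> 'v \<Rightarrow> vec) \<Rightarrow> ('v \<Rightarrow> vec) \<Rightarrow> 'v \<Rightarrow> nat \<Rightarrow> vec \<Rightarrow> vec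
   \<Rightarrow> 'v rstate \<Rightarrow> 'v rstate \<Rightarrow> bool"
  for E c h vd M C D
where
  main_done:
    "mode s = Main \<Longrightarrow> opn s = {} \<Longrightarrow> rme_step E c h vd M C D s (s\<lparr>mode := Done\<rparr>)"
| main_discard:
    "mode s = Main \<Longrightarrow> l \<in> opn s \<Longrightarrow>
     (\<forall>l2\<in>opn s. lex_le M (lr (store s l)) (lr (store s l2))) \<Longrightarrow>
     frontier_check M s l \<or> sol_check M s l \<Longrightarrow>
     rme_step E c h vd M C D s (s\<lparr>opn := opn s - {l}\<rparr>)"
| main_goal:
    "mode s = Main \<Longrightarrow> l \<in> opn s \<Longrightarrow>
     (\<forall>l2\<in>opn s. lex_le M (lr (store s l)) (lr (store s l2))) \<Longrightarrow>
     \<not> frontier_check M s l \<Longrightarrow> \<not> sol_check M s l \<Longrightarrow>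
     lv (store s l) = vd \<Longrightarrow>
     rme_step E c h vd M C D s (s\<lparr>opn := opn s - {l}, sol := update_sol M s l\<rparr>)"
| main_pid:
    "mode s = Main \<Longrightarrow> l \<in> opn s \<Longrightarrow>
     (\<forall>l2\<in>opn s. lex_le M (lr (store s l)) (lr (store s l2))) \<Longrightarrow>
     \<not> frontier_check M s l \<Longrightarrow> \<not> sol_check M s l \<Longrightarrow>
     lv (store s l) \<noteq> vd \<Longrightarrow>
     vlt M (h (lv (store s l))) D \<Longrightarrow>
     s1 = update_frontier M (s\<lparr>opn := opn s - {l}\<rparr>) l \<Longrightarrow>
     L = store s l \<Longrightarrow>
     rme_step E c h vd M C D s
       ((add_label s1 \<lparr>lv = lv L, lg = lg L, lf = vadd (lg L) (h (lv L)),
                       lr = vadd (lg L) (h (lv L)), lpar = lpar L\<rparr>)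
          \<lparr>mode := PidT (fresh s1) {h (lv L)}\<rparr>)"
| main_exp:
    "mode s = Main \<Longrightarrow> l \<in> opn s \<Longrightarrow>
     (\<forall>l2\<in>opn s. lex_le M (lr (store s l)) (lr (store s l2))) \<Longrightarrow>
     \<not> frontier_check M s l \<Longrightarrow> \<not> sol_check M s l \<Longrightarrow>
     lv (store s l) \<noteq> vd \<Longrightarrow>
     \<not> vlt M (h (lv (store s l))) D \<Longrightarrow>
     distinct xs \<Longrightarrow> set xs = {v'. (lv (store s l), v') \<in> E} \<Longrightarrow>
     rme_step E c h vd M C D s ((update_frontier M (s\<lparr>opn := opn s - {l}\<rparr>) l)\<lparr>mode := Exp l xs None\<rparr>)"
| exp_child:
    "mode s = Exp l (v' # todo) rn \<Longrightarrow>
     x = child c h s l v' \<Longrightarrow> s1 = add_label s x \<Longrightarrow> l' = fresh s \<Longrightarrow>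
     rme_step E c h vd M C D s
       (if lex_less M (lf x) (lr (store s l)) then s1\<lparr>mode := Exp l todo rn\<rparr>
        else if frontier_check M s1 l' \<or> sol_check M s1 l' then s1\<lparr>mode := Exp l todo rn\<rparr>
        else if lex_less M (vadd (lr (store s l)) C) (lf x)
          then s1\<lparr>mode := Exp l todo (Some (lexmin M rn (lf x)))\<rparr>
        else s1\<lparr>opn := insert l' (opn s1), mode := Exp l todo rn\<rparr>)"
| exp_end_inf:
    "mode s = Exp l [] None \<Longrightarrow> rme_step E c h vd M C D s (s\<lparr>mode := Main\<rparr>)"
| exp_end_reinsert:
    "mode s = Exp l [] (Some r) \<Longrightarrow>
     rme_step E c h vd M C D s
       (s\<lparr>store := (store s)(l := (store s l)\<lparr>lr := r\<rparr>), opn := insert l (opn s), mode := Main\<rparr>)"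
| pidT_end:
    "mode s = PidT lp T \<Longrightarrow> T = {} \<Longrightarrow> rme_step E c h vd M C D s (s\<lparr>mode := Main\<rparr>)"
| pidT_iter:
    "mode s = PidT lp T \<Longrightarrow> T \<noteq> {} \<Longrightarrow>
     rme_step E c h vd M C D s (s\<lparr>mode := PidIn lp T {} [lp]\<rparr>)"
| pidIn_end:
    "mode s = PidIn lp T Tn [] \<Longrightarrow> rme_step E c h vd M C D s (s\<lparr>mode := PidT lp Tn\<rparr>)"
| pidIn_skip:
    "mode s = PidIn lp T Tn (l # stk) \<Longrightarrow> sol_check M s l \<Longrightarrow>
     rme_step E c h vd M C D s (s\<lparr>mode := PidIn lp T Tn stk\<rparr>)"
| pidIn_exp:
    "mode s = PidIn lp T Tn (l # stk) \<Longrightarrow> \<not> sol_check M s l \<Longrightarrow>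
     distinct xs \<Longrightarrow> set xs = {v'. (lv (store s l), v') \<in> E} \<Longrightarrow>
     rme_step E c h vd M C D s (s\<lparr>mode := PidE lp T Tn stk l xs\<rparr>)"
| pidE_child:
    "mode s = PidE lp T Tn stk l (v' # todo) \<Longrightarrow>
     x = child c h s l v' \<Longrightarrow> s1 = add_label s x \<Longrightarrow> l' = fresh s \<Longrightarrow>
     rme_step E c h vd M C D s
       (if sol_check M s1 l' then s1\<lparr>mode := PidE lp T Tn stk l todo\<rparr>
        else if threshold_check M T (lf x)
          then s1\<lparr>mode := PidE lp T (update_threshold M Tn (lf x)) stk l todo\<rparr>
        else if v' = vd then s1\<lparr>sol := update_sol M s1 l', mode := PidE lp T Tn stk l todo\<rparr>
        else s1\<lparr>mode := PidE lp T Tn (l' # stk) l todo\<rparr>)"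
| pidE_end:
    "mode s = PidE lp T Tn stk l [] \<Longrightarrow>
     rme_step E c h vd M C D s (s\<lparr>mode := PidIn lp T Tn stk\<rparr>)"

inductive represents :: "(nat \<Rightarrow> 'v lab) \<Rightarrow> nat \<Rightarrow> 'v list \<Rightarrow> bool" for st where
  repr_root: "lpar (st l) = None \<Longrightarrow> represents st l [lv (st l)]"
| repr_step: "lpar (st l) = Some p \<Longrightarrow> represents st p ps \<Longrightarrow> represents st l (ps @ [lv (st l)])"

definition result_paths :: "'v rstate \<Rightarrow> 'v list set" where
  "result_paths s = {p. \<exists>l\<in>sol s. represents (store s) l p}"

definition rme_always_terminates ::
  "('v \<times> 'v) set \<Rightarrow> ('v \<Rightarrow> 'v \<Rightarrow> vec) \<Rightarrow> ('v \<Rightarrow> vec) \<Rightarrow> 'v \<Rightarrow> 'v \<Rightarrow> nat \<Rightarrow> vec \<Rightarrow> vec \<Rightarrow> bool" where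
  "rme_always_terminates E c h vs vd M C D \<longleftrightarrow>
     (\<forall>s. (rme_step E c h vd M C D)\<^sup>*\<^sup>* (rme_init h vs) s \<longrightarrow>
          mode s = Done \<or> (\<exists>s'. rme_step E c h vd M C D s s')) \<and>
     \<not> (\<exists>f. f 0 = rme_init h vs \<and> (\<forall>n. rme_step E c h vd M C D (f n) (f (Suc n))))"

end

theory Submission
  imports Defs
begin

lemma lex_less_trans: "lex_less M a b \<Longrightarrow> lex_less M b c \<Longrightarrow> lex_less M a c"
  unfolding lex_less_def
proof (elim exE conjE)
  fix k1 k2 assume 1: "k1 < M" "\<forall>i<k1. a i = b i" "a k1 < b k1" and 2: "k2 < M" "\<forall>i<k2. b i = c i" "b k2 < c k2"
  show "\<exists>k<M. (\<forall>i<k. a i = c i) \<and> a k < c k"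
  proof (cases k1 k2 rule: linorder_cases)
    case less then show ?thesis using 1 2 by (intro exI[of _ k1]) auto
  next
    case equal then show ?thesis using 1 2 by (intro exI[of _ k1]) auto
  next
    case greater then show ?thesis using 1 2 by (intro exI[of _ k2]) auto
  qed
qed

lemma lex_less_veq: "lex_less M a b \<Longrightarrow> veq M b c \<Longrightarrow> lex_less M a c"
  unfolding lex_less_def veq_def
  by (elim exE conjE, rule_tac x=k in exI) auto

lemma veq_lex_less: "veq M a b \<Longrightarrow> lex_less M b c \<Longrightarrow> lex_less M a c"
  unfolding lex_less_def veq_def
  by (elim exE conjE, rule_tac x=k in exI) auto

lemma lex_le_trans: "lex_le M a b \<Longrightarrow> lex_le M b c \<Longrightarrow> lex_le M a c"
proof -
  have vt: "veq M a b \<Longrightarrow> veq M b c \<Longrightarrow> veq M a c" by (simp add: veq_def)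
  assume "lex_le M a b" "lex_le M b c"
  then show ?thesis unfolding lex_le_def
    using lex_less_trans[of M a b c] lex_less_veq[of M a b c] veq_lex_less[of M a b c] vt by blast
qed

lemma lex_less_irrefl: "\<not> lex_less M a a"
  unfolding lex_less_def by auto

lemma lex_le_not_less: "lex_le M a b \<Longrightarrow> \<not> lex_less M b a"
proof
  assume 1: "lex_le M a b" and 2: "lex_less M b a"
  have "lex_less M a a"
  proof (cases "lex_less M a b")
    case True then show ?thesis using 2 lex_less_trans by blast
  next
    case False then have "veq M a b" using 1 unfolding lex_le_def by simp
    then show ?thesis using 2 veq_lex_less by blast
  qed
  then show False by (simp add: lex_less_irrefl)
qed

lemma lex_le_less_trans: "lex_le M a b \<Longrightarrow> lex_less M b c \<Longrightarrow> lex_less M a c"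
  unfolding lex_le_def using lex_less_trans[of M a b c] veq_lex_less[of M a b c] by (elim disjE) auto

lemma lex_less_le_trans: "lex_less M a b \<Longrightarrow> lex_le M b c \<Longrightarrow> lex_less M a c"
  unfolding lex_le_def using lex_less_trans[of M a b c] lex_less_veq[of M a b c] by (elim disjE) auto

lemma lex_total: "lex_le M a b \<or> lex_less M b a"
proof (cases "veq M a b")
  case True then show ?thesis by (simp add: lex_le_def)
next
  case False
  then obtain k where k: "k < M" "a k \<noteq> b k" unfolding veq_def by auto
  have "\<exists>k. k < M \<and> a k \<noteq> b k" using k by blast
  then obtain k0 where k0: "k0 < M" "a k0 \<noteq> b k0" and mm: "\<forall>m<k0. \<not> (m < M \<and> a m \<noteq> b m)"
    unfolding exists_least_iff[of "\<lambda>k. k < M \<and> a k \<noteq> b k"] by blast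
  have eq: "\<forall>i<k0. a i = b i" using mm k0(1) by auto
  show ?thesis
  proof (cases "a k0 < b k0")
    case True then show ?thesis using k0 eq unfolding lex_le_def lex_less_def by blast
  next
    case False then have "b k0 < a k0" using k0(2) by linarith
    then have "lex_less M b a" using k0 eq unfolding lex_less_def by (intro exI[of _ k0]) auto
    then show ?thesis by simp
  qed
qed

lemma lex_le_refl: "lex_le M a a" by (simp add: lex_le_def veq_def)

lemma vle_lex_le: "vle M a b \<Longrightarrow> lex_le M a b"
proof -
  assume v: "vle M a b"
  have "\<not> lex_less M b a"
  proof
    assume "lex_less M b a"
    then obtain k where "k < M" "b k < a k" unfolding lex_less_def by auto
    then show False using v unfolding vle_def by force
  qed
  then show ?thesis using lex_total[of M a b] by blast
qed

lemma lexmin_le1: "lex_le M (lexmin M rn f) f"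
proof (cases rn)
  case None then show ?thesis by (simp add: lex_le_refl)
next
  case (Some r) then show ?thesis using lex_total[of M r f] by (auto simp: lex_le_def veq_def)
qed

lemma lexmin_le2: "rn = Some r \<Longrightarrow> lex_le M (lexmin M rn f) r"
  by (auto simp: lex_le_def veq_def)

lemma lexmin_cases: "lexmin M rn f = f \<or> rn = Some (lexmin M rn f)"
  by (cases rn) auto

lemma lex_lemma_C: "\<forall>i<M. 0 \<le> C i \<Longrightarrow> lex_less M (vadd r C) f \<Longrightarrow> lex_less M r f"
  by (rule lex_le_less_trans[OF vle_lex_le]) (auto simp: vle_def vadd_def)

function pth :: "(nat \<Rightarrow> 'v lab) \<Rightarrow> nat \<Rightarrow> 'v list" where
  "pth st l = (case lpar (st l) of None \<Rightarrow> [lv (st l)]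
      | Some p \<Rightarrow> (if p < l then pth st p @ [lv (st l)] else [lv (st l)]))"
  by pat_completeness auto
termination by (relation "measure (\<lambda>(st, l). l)") auto

declare pth.simps[simp del]

lemma pth_None: "lpar (st l) = None \<Longrightarrow> pth st l = [lv (st l)]"
  by (simp add: pth.simps)

lemma pth_Some: "lpar (st l) = Some p \<Longrightarrow> p < l \<Longrightarrow> pth st l = pth st p @ [lv (st l)]"
  by (simp add: pth.simps)

lemma pth_cong: "(\<And>i. i \<le> l \<Longrightarrow> lv (st' i) = lv (st i) \<and> lpar (st' i) = lpar (st i)) \<Longrightarrow> pth st' l = pth st l"
proof (induction st l rule: pth.induct)
  case (1 st l)
  show ?case
  proof (cases "lpar (st l)")
    case None then show ?thesis using 1(2)[of l] by (simp add: pth.simps)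
  next
    case (Some p)
    show ?thesis
    proof (cases "p < l")
      case True
      have "pth st' p = pth st p" using 1(1)[OF Some True] 1(2) True by simp
      then show ?thesis using Some True 1(2)[of l] by (simp add: pth.simps)
    next
      case False then show ?thesis using Some 1(2)[of l] by (simp add: pth.simps)
    qed
  qed
qed

lemma pth_nonempty: "pth st l \<noteq> []"
  by (simp add: pth.simps split: option.splits)

lemma last_pth: "last (pth st l) = lv (st l)"
  by (simp add: pth.simps split: option.splits)

locale rme =
  fixes V :: "'v set" and E :: "('v \<times> 'v) set" and c :: "'v \<Rightarrow> 'v \<Rightarrow> nat \<Rightarrow> real"
    and h :: "'v \<Rightarrow> nat \<Rightarrow> real" and vs vd :: 'v and M :: nat and C :: "nat \<Rightarrow> real"
  assumes finV: "finite V" and EV: "E \<subseteq> V \<times> V" and vsV: "vs \<in> V" and vdV: "vd \<in> V"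
    and Mpos: "0 < M"
    and cnn: "\<forall>(u, w)\<in>E. \<forall>i<M. 0 \<le> c u w i"
    and cons: "consistent_heuristic V E c M vd h"
    and Cnn: "\<forall>i<M. 0 \<le> C i"
begin

lemma cnn': "(u, w) \<in> E \<Longrightarrow> i < M \<Longrightarrow> 0 \<le> c u w i" using cnn by auto
lemma h_vd: "i < M \<Longrightarrow> h vd i = 0" using cons unfolding consistent_heuristic_def by auto
lemma h_nn: "v \<in> V \<Longrightarrow> i < M \<Longrightarrow> 0 \<le> h v i" using cons unfolding consistent_heuristic_def by auto
lemma h_cons: "(u, w) \<in> E \<Longrightarrow> i < M \<Longrightarrow> h u i \<le> c u w i + h w i"
  using cons unfolding consistent_heuristic_def by auto

definition succ :: "'v \<Rightarrow> 'v set" where "succ v = {v'. (v, v') \<in> E}"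

lemma finite_E: "finite E" using finV EV finite_subset by (metis finite_SigmaI)
lemma finite_succ: "finite (succ v)"
proof -
  have "succ v \<subseteq> snd ` E" unfolding succ_def by force
  then show ?thesis using finite_E finite_subset by blast
qed

definition fch :: "(nat \<Rightarrow> 'v lab) \<Rightarrow> nat \<Rightarrow> 'v \<Rightarrow> vec" where
  "fch st l v' = vadd (vadd (lg (st l)) (c (lv (st l)) v')) (h v')"

definition sc :: "'v list \<Rightarrow> nat \<Rightarrow> nat \<Rightarrow> vec" where
  "sc p k j = (\<lambda>m. \<Sum>i\<in>{k..<j}. c (p!i) (p!Suc i) m)"

definition covered :: "'v rstate \<Rightarrow> vec \<Rightarrow> bool" where
  "covered s T \<longleftrightarrow> (\<exists>x\<in>sol s. vle M (lg (store s x)) T)"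

definition active :: "'v rstate \<Rightarrow> nat \<Rightarrow> nat \<Rightarrow> 'v list \<Rightarrow> bool" where
  "active s l j p \<longleftrightarrow>
    (l \<in> opn s \<and> (l \<in> hist s \<longrightarrow> Suc j < length p \<and> lex_le M (lr (store s l)) (fch (store s) l (p ! Suc j)))) \<or>
    (\<exists>todo rn. mode s = Exp l todo rn \<and> Suc j < length p \<and>
      ((p ! Suc j \<in> set todo \<and> lex_le M (lr (store s l)) (fch (store s) l (p ! Suc j))) \<or>
       (\<exists>r. rn = Some r \<and> lex_le M r (fch (store s) l (p ! Suc j)))))"

definition Reach :: "'v rstate \<Rightarrow> 'v list \<Rightarrow> nat \<Rightarrow> vec \<Rightarrow> bool" where
  "Reach s p k b \<longleftrightarrow> covered s (vadd b (sc p k (length p - 1))) \<or>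
    (\<exists>l j. k \<le> j \<and> j < length p \<and> lv (store s l) = p ! j \<and>
       vle M (lg (store s l)) (vadd b (sc p k j)) \<and> active s l j p)"

definition tpath :: "'v list \<Rightarrow> bool" where
  "tpath p \<longleftrightarrow> is_path E p \<and> last p = vd"

lemma tpath_edge: "tpath p \<Longrightarrow> Suc i < length p \<Longrightarrow> (p!i, p!Suc i) \<in> E"
  unfolding tpath_def is_path_def by auto

lemma tpath_last: "tpath p \<Longrightarrow> p ! (length p - 1) = vd"
  unfolding tpath_def is_path_def by (metis last_conv_nth)

lemma tpath_len: "tpath p \<Longrightarrow> 0 < length p"
  unfolding tpath_def is_path_def by auto

lemma sc_split: "k \<le> j \<Longrightarrow> j \<le> j' \<Longrightarrow> sc p k j' m = sc p k j m + sc p j j' m"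
  unfolding sc_def using sum.atLeastLessThan_concat[of k j j' "\<lambda>i. c (p!i) (p!Suc i) m"] by simp

lemma sc_nn: "tpath p \<Longrightarrow> j < length p \<Longrightarrow> m < M \<Longrightarrow> 0 \<le> sc p k j m"
  unfolding sc_def by (rule sum_nonneg) (auto intro!: cnn' tpath_edge)

lemma sc_Suc: "sc p j (Suc j) = c (p!j) (p!Suc j)"
  unfolding sc_def by simp

lemma sc_Suc_left: "j < j' \<Longrightarrow> sc p j j' m = c (p!j) (p!Suc j) m + sc p (Suc j) j' m"
  unfolding sc_def by (simp add: sum.atLeast_Suc_lessThan)

lemma sc_empty: "sc p j j m = 0" unfolding sc_def by simp

lemma h_le_sc: "tpath p \<Longrightarrow> j < length p \<Longrightarrow> i < M \<Longrightarrow> h (p!j) i \<le> sc p j (length p - 1) i"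
proof (induction "length p - 1 - j" arbitrary: j)
  case 0
  then have "j = length p - 1" by simp
  then show ?case using tpath_last[OF 0(2)] h_vd[OF 0(4)] by (simp add: sc_empty)
next
  case (Suc x)
  then have j: "Suc j < length p" by simp
  have ih: "h (p!Suc j) i \<le> sc p (Suc j) (length p - 1) i" using Suc j by simp
  have "h (p!j) i \<le> c (p!j) (p!Suc j) i + h (p!Suc j) i" using h_cons[OF tpath_edge[OF Suc(3) j] Suc(5)] .
  also have "\<dots> \<le> sc p j (length p - 1) i" using ih sc_Suc_left[of j "length p - 1" p i] j by simp
  finally show ?case .
qed

lemma covered_mono: "covered s T \<Longrightarrow> vle M T T' \<Longrightarrow> covered s T'"
  unfolding covered_def vle_def by (meson order_trans)

lemma reach_lift:
  assumes tp: "tpath p" and R: "Reach s p j' b'" and kj: "k \<le> j'" and jl: "j' < length p"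
    and bb: "vle M b' (vadd b (sc p k j'))"
  shows "Reach s p k b"
  using R unfolding Reach_def[of s p j' b']
proof (elim disjE exE conjE)
  assume cv: "covered s (vadd b' (sc p j' (length p - 1)))"
  have "vle M (vadd b' (sc p j' (length p - 1))) (vadd b (sc p k (length p - 1)))"
    unfolding vle_def vadd_def
  proof (intro allI impI)
    fix i assume i: "i < M"
    have "b' i \<le> b i + sc p k j' i" using bb i unfolding vle_def vadd_def by auto
    moreover have "sc p k (length p - 1) i = sc p k j' i + sc p j' (length p - 1) i"
      using sc_split[of k j' "length p - 1"] kj jl by simp
    ultimately show "b' i + sc p j' (length p - 1) i \<le> b i + sc p k (length p - 1) i" by simp
  qed
  then show ?thesis using covered_mono[OF cv] unfolding Reach_def by blast
next
  fix l j assume a: "j' \<le> j" "j < length p" "lv (store s l) = p ! j"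
    "vle M (lg (store s l)) (vadd b' (sc p j' j))" "active s l j p"
  have "vle M (lg (store s l)) (vadd b (sc p k j))"
    unfolding vle_def vadd_def
  proof (intro allI impI)
    fix i assume i: "i < M"
    have "b' i \<le> b i + sc p k j' i" using bb i unfolding vle_def vadd_def by auto
    moreover have "sc p k j i = sc p k j' i + sc p j' j i"
      using sc_split[of k j' j] kj a by simp
    moreover have "lg (store s l) i \<le> b' i + sc p j' j i" using a(4) i unfolding vle_def vadd_def by auto
    ultimately show "lg (store s l) i \<le> b i + sc p k j i" by simp
  qed
  then show ?thesis unfolding Reach_def using a kj by (intro disjI2) (metis order_trans)
qed

definition WIT :: "'v rstate \<Rightarrow> 'v rstate \<Rightarrow> 'v list \<Rightarrow> nat \<Rightarrow> nat \<Rightarrow> bool" where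
  "WIT s s' p l j \<longleftrightarrow>
     (lv (store s' l) = lv (store s l) \<and> lg (store s' l) = lg (store s l) \<and> active s' l j p) \<or>
     covered s' (vadd (lg (store s l)) (sc p j (length p - 1))) \<or>
     (\<exists>j' b'. j < j' \<and> j' < length p \<and> vle M b' (vadd (lg (store s l)) (sc p j j')) \<and>
         (Reach s p j' b' \<or> Reach s' p j' b')) \<or>
     (l \<notin> hist s \<and> Reach s' p j (lg (store s l)))"

lemma reach_transfer:
  assumes tp: "tpath p"
    and cov: "\<And>T. covered s T \<Longrightarrow> covered s' T"
    and wit: "\<And>l j. j < length p \<Longrightarrow> lv (store s l) = p!j \<Longrightarrow> active s l j p \<Longrightarrow> WIT s s' p l j"
  shows "Reach s p k b \<Longrightarrow> Reach s' p k b"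
proof (induction "length p - k" arbitrary: k b rule: less_induct)
  case less
  show ?case using less.prems unfolding Reach_def[of s]
  proof (elim disjE exE conjE)
    assume "covered s (vadd b (sc p k (length p - 1)))"
    then show ?thesis unfolding Reach_def using cov by blast
  next
    fix l j assume a: "k \<le> j" "j < length p" "lv (store s l) = p ! j"
      "vle M (lg (store s l)) (vadd b (sc p k j))" "active s l j p"
    have W: "WIT s s' p l j" using wit a by blast
    show ?thesis using W unfolding WIT_def
    proof (elim disjE exE conjE)
      assume "lv (store s' l) = lv (store s l)" "lg (store s' l) = lg (store s l)" "active s' l j p"
      then show ?thesis unfolding Reach_def using a by (intro disjI2) (metis)
    next
      assume "covered s' (vadd (lg (store s l)) (sc p j (length p - 1)))"
      then have "Reach s' p j (lg (store s l))" unfolding Reach_def by simp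
      then show ?thesis using reach_lift[OF tp _ a(1) a(2)] a(4) by blast
    next
      fix j' b' assume b: "j < j'" "j' < length p" "vle M b' (vadd (lg (store s l)) (sc p j j'))" "Reach s p j' b'"
      then have "Reach s' p j' b'" using less.hyps[of j' b'] a by simp
      have "vle M b' (vadd b (sc p k j'))"
        unfolding vle_def vadd_def
      proof (intro allI impI)
        fix i assume i: "i < M"
        have "b' i \<le> lg (store s l) i + sc p j j' i" using b(3) i unfolding vle_def vadd_def by auto
        moreover have "lg (store s l) i \<le> b i + sc p k j i" using a(4) i unfolding vle_def vadd_def by auto
        moreover have "sc p k j' i = sc p k j i + sc p j j' i" using sc_split[of k j j'] a b by simp
        ultimately show "b' i \<le> b i + sc p k j' i" by simp
      qed
      then show ?thesis using reach_lift[OF tp \<open>Reach s' p j' b'\<close>] a b by simp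
    next
      fix j' b' assume b: "j < j'" "j' < length p" "vle M b' (vadd (lg (store s l)) (sc p j j'))" "Reach s' p j' b'"
      have "vle M b' (vadd b (sc p k j'))"
        unfolding vle_def vadd_def
      proof (intro allI impI)
        fix i assume i: "i < M"
        have "b' i \<le> lg (store s l) i + sc p j j' i" using b(3) i unfolding vle_def vadd_def by auto
        moreover have "lg (store s l) i \<le> b i + sc p k j i" using a(4) i unfolding vle_def vadd_def by auto
        moreover have "sc p k j' i = sc p k j i + sc p j j' i" using sc_split[of k j j'] a b by simp
        ultimately show "b' i \<le> b i + sc p k j' i" by simp
      qed
      then show ?thesis using reach_lift[OF tp b(4)] a b by simp
    next
      assume "l \<notin> hist s" "Reach s' p j (lg (store s l))"
      then show ?thesis using reach_lift[OF tp _ a(1) a(2)] a(4) by blast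
    qed
  qed
qed

end

lemma is_path_snoc: "is_path E xs \<Longrightarrow> (last xs, v) \<in> E \<Longrightarrow> is_path E (xs @ [v])"
  unfolding is_path_def
proof (intro conjI allI impI)
  fix i assume a: "xs \<noteq> [] \<and> (\<forall>i. Suc i < length xs \<longrightarrow> (xs ! i, xs ! Suc i) \<in> E)" "(last xs, v) \<in> E"
    "Suc i < length (xs @ [v])"
  show "((xs @ [v]) ! i, (xs @ [v]) ! Suc i) \<in> E"
  proof (cases "Suc i < length xs")
    case True then show ?thesis using a by (simp add: nth_append)
  next
    case False
    then have "i = length xs - 1" "Suc i = length xs" using a by auto
    then show ?thesis using a by (simp add: nth_append last_conv_nth)
  qed
qed simp

lemma path_cost_snoc: "xs \<noteq> [] \<Longrightarrow> path_cost c (xs @ [v]) = vadd (path_cost c xs) (c (last xs) v)"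
proof -
  assume ne: "xs \<noteq> []"
  define n where "n = length xs - 1"
  have ln: "length xs = Suc n" using ne n_def by (cases xs) auto
  show ?thesis unfolding path_cost_def vadd_def
  proof (rule ext)
    fix k
    have "(\<Sum>i<length (xs @ [v]) - 1. c ((xs @ [v]) ! i) ((xs @ [v]) ! Suc i) k)
        = (\<Sum>i<Suc n. c ((xs @ [v]) ! i) ((xs @ [v]) ! Suc i) k)" using ln by simp
    also have "\<dots> = (\<Sum>i<n. c ((xs @ [v]) ! i) ((xs @ [v]) ! Suc i) k) + c ((xs @ [v]) ! n) ((xs @ [v]) ! Suc n) k"
      by simp
    also have "(\<Sum>i<n. c ((xs @ [v]) ! i) ((xs @ [v]) ! Suc i) k) = (\<Sum>i<n. c (xs ! i) (xs ! Suc i) k)"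
      by (rule sum.cong) (auto simp: nth_append ln)
    also have "c ((xs @ [v]) ! n) ((xs @ [v]) ! Suc n) k = c (last xs) v k"
      using ln ne by (simp add: nth_append last_conv_nth)
    finally show "(\<Sum>i<length (xs @ [v]) - 1. c ((xs @ [v]) ! i) ((xs @ [v]) ! Suc i) k) =
         (\<Sum>i<length xs - 1. c (xs ! i) (xs ! Suc i) k) + c (last xs) v k" using ln by simp
  qed
qed

context rme begin

definition inv_lab :: "'v rstate \<Rightarrow> bool" where
  "inv_lab s \<longleftrightarrow> 0 < fresh s \<and> lv (store s 0) = vs \<and> lg (store s 0) = (\<lambda>_. 0) \<and> lpar (store s 0) = None \<and>
    (\<forall>l. 0 < l \<longrightarrow> l < fresh s \<longrightarrow> (\<exists>p. lpar (store s l) = Some p \<and> p < l \<and>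
        (lv (store s p), lv (store s l)) \<in> E \<and>
        lg (store s l) = vadd (lg (store s p)) (c (lv (store s p)) (lv (store s l))))) \<and>
    (\<forall>l < fresh s. lf (store s l) = vadd (lg (store s l)) (h (lv (store s l))) \<and> lv (store s l) \<in> V) \<and>
    (\<forall>l < fresh s. l \<notin> hist s \<longrightarrow> lr (store s l) = lf (store s l))"

definition inv_sets :: "'v rstate \<Rightarrow> bool" where
  "inv_sets s \<longleftrightarrow> opn s \<subseteq> {..<fresh s} \<and> hist s \<subseteq> {..<fresh s} \<and> sol s \<subseteq> {..<fresh s} \<and>
    (\<forall>l\<in>hist s. lv (store s l) \<noteq> vd) \<and>
    (\<forall>v. \<forall>l\<in>alpha s v. l \<in> hist s \<and> lv (store s l) = v) \<and>
    (\<forall>a\<in>hist s. \<exists>a'\<in>alpha s (lv (store s a)). vle M (lg (store s a')) (lg (store s a))) \<and>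
    (\<forall>a\<in>hist s. \<forall>b\<in>hist s. a \<noteq> b \<longrightarrow> lv (store s a) = lv (store s b) \<longrightarrow> \<not> veq M (lg (store s a)) (lg (store s b))) \<and>
    (\<forall>x\<in>sol s. lv (store s x) = vd) \<and>
    (\<forall>x\<in>sol s. \<forall>y\<in>sol s. x \<noteq> y \<longrightarrow> \<not> vle M (lg (store s x)) (lg (store s y))) \<and>
    (\<forall>l\<in>opn s \<union> hist s. 0 < l \<longrightarrow> the (lpar (store s l)) \<in> hist s) \<and>
    (\<forall>l\<in>opn s \<union> hist s. distinct (pth (store s) l))"

definition inv_mode :: "'v rstate \<Rightarrow> bool" where
  "inv_mode s \<longleftrightarrow> mode s = Main \<or> (mode s = Done \<and> opn s = {}) \<or>
    (\<exists>l todo rn. mode s = Exp l todo rn \<and> l \<in> hist s \<and> l \<notin> opn s \<and> set todo \<subseteq> succ (lv (store s l)) \<and>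
      (\<forall>r. rn = Some r \<longrightarrow> (\<exists>v0\<in>succ (lv (store s l)). r = fch (store s) l v0 \<and> lex_less M (lr (store s l)) r)))"

definition inv_claims :: "'v rstate \<Rightarrow> bool" where
  "inv_claims s \<longleftrightarrow> (\<forall>q. st_path E vs vd q \<longrightarrow> Reach s q 0 (\<lambda>_. 0)) \<and>
    (\<forall>l\<in>hist s. \<forall>p i. tpath p \<longrightarrow> Suc i < length p \<longrightarrow> p!i = lv (store s l) \<longrightarrow>
       active s l i p \<or> Reach s p (Suc i) (vadd (lg (store s l)) (c (p!i) (p!Suc i))))"

definition Inv :: "'v rstate \<Rightarrow> bool" where
  "Inv s \<longleftrightarrow> inv_lab s \<and> inv_sets s \<and> inv_mode s \<and> inv_claims s"

lemma pth_props:
  assumes I: "inv_lab s"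
  shows "l < fresh s \<Longrightarrow> represents (store s) l (pth (store s) l) \<and> is_path E (pth (store s) l) \<and>
     hd (pth (store s) l) = vs \<and> path_cost c (pth (store s) l) = lg (store s l) \<and> set (pth (store s) l) \<subseteq> V"
proof (induction l rule: less_induct)
  case (less l)
  show ?case
  proof (cases "l = 0")
    case True
    then have "pth (store s) l = [vs]" using I unfolding inv_lab_def by (simp add: pth_None)
    moreover have "represents (store s) l [vs]" using I True unfolding inv_lab_def
      by (metis represents.repr_root)
    ultimately show ?thesis using I True vsV unfolding inv_lab_def
      by (simp add: is_path_def path_cost_def)
  next
    case False
    then obtain p where p: "lpar (store s l) = Some p" "p < l" "(lv (store s p), lv (store s l)) \<in> E"
      "lg (store s l) = vadd (lg (store s p)) (c (lv (store s p)) (lv (store s l)))"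
      using I less.prems unfolding inv_lab_def by blast
    have ih: "represents (store s) p (pth (store s) p) \<and> is_path E (pth (store s) p) \<and>
     hd (pth (store s) p) = vs \<and> path_cost c (pth (store s) p) = lg (store s p) \<and> set (pth (store s) p) \<subseteq> V"
      using less.IH[of p] p less.prems by simp
    have eq: "pth (store s) l = pth (store s) p @ [lv (store s l)]" using pth_Some[of "store s" l p, OF p(1) p(2)] .
    have ne: "pth (store s) p \<noteq> []" by (rule pth_nonempty)
    have lv: "lv (store s l) \<in> V" using I less.prems unfolding inv_lab_def by blast
    have r: "represents (store s) l (pth (store s) p @ [lv (store s l)])"
      using ih p(1) by (blast intro: represents.repr_step)
    have ip: "is_path E (pth (store s) p @ [lv (store s l)])"
      using ih p(3) by (intro is_path_snoc) (auto simp: last_pth)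
    have hd: "hd (pth (store s) p @ [lv (store s l)]) = vs" using ih ne by simp
    have pc: "path_cost c (pth (store s) p @ [lv (store s l)]) = lg (store s l)"
      using ih ne p(4) by (simp add: path_cost_snoc last_pth)
    have st: "set (pth (store s) p @ [lv (store s l)]) \<subseteq> V" using ih lv by simp
    show ?thesis unfolding eq using r ip hd pc st by blast
  qed
qed

lemma repr_pth:
  assumes I: "inv_lab s"
  shows "represents (store s) l p \<Longrightarrow> l < fresh s \<Longrightarrow> p = pth (store s) l"
proof (induction rule: represents.induct)
  case (repr_root l)
  then show ?case by (simp add: pth_None)
next
  case (repr_step l p ps)
  have "l \<noteq> 0"
  proof
    assume "l = 0" then show False using repr_step.hyps(1) I unfolding inv_lab_def by simp
  qed
  then obtain p' where "lpar (store s l) = Some p'" "p' < l" using I repr_step.prems unfolding inv_lab_def by blast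
  then have "p' = p" "p < l" using repr_step.hyps(1) by auto
  then show ?case using repr_step pth_Some[of "store s" l p] by simp
qed

lemma anc:
  assumes I: "inv_lab s" and S: "inv_sets s"
  shows "l \<in> hist s \<Longrightarrow> v \<in> set (pth (store s) l) \<Longrightarrow>
     \<exists>a\<in>hist s. lv (store s a) = v \<and> vle M (lg (store s a)) (lg (store s l))"
proof (induction l rule: less_induct)
  case (less l)
  have lf: "l < fresh s" using less.prems S unfolding inv_sets_def by auto
  show ?case
  proof (cases "l = 0")
    case True
    then have "pth (store s) l = [lv (store s l)]" using I unfolding inv_lab_def by (simp add: pth_None)
    then have "v = lv (store s l)" using less.prems(2) by simp
    then show ?thesis using less.prems(1) by (intro bexI[of _ l]) (auto simp: vle_def)
  next
    case False
    then obtain p where p: "lpar (store s l) = Some p" "p < l" "(lv (store s p), lv (store s l)) \<in> E"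
      "lg (store s l) = vadd (lg (store s p)) (c (lv (store s p)) (lv (store s l)))"
      using I lf unfolding inv_lab_def by blast
    have "the (lpar (store s l)) \<in> hist s" using S less.prems(1) False unfolding inv_sets_def by blast
    then have ph: "p \<in> hist s" using p(1) by simp
    have eq: "pth (store s) l = pth (store s) p @ [lv (store s l)]" using pth_Some[of "store s" l p, OF p(1) p(2)] .
    show ?thesis
    proof (cases "v = lv (store s l)")
      case True then show ?thesis using less.prems(1) by (intro bexI[of _ l]) (auto simp: vle_def)
    next
      case False
      then have "v \<in> set (pth (store s) p)" using less.prems eq by simp
      then obtain a where a: "a \<in> hist s" "lv (store s a) = v" "vle M (lg (store s a)) (lg (store s p))"
        using less.IH[OF p(2) ph] by blast
      have "vle M (lg (store s p)) (lg (store s l))" using p(4) cnn'[OF p(3)] unfolding vle_def vadd_def by auto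
      then have "vle M (lg (store s a)) (lg (store s l))" using a(3) unfolding vle_def by (meson order_trans)
      then show ?thesis using a(1,2) by blast
    qed
  qed
qed

lemma Inv_init: "Inv (rme_init h vs)"
proof -
  let ?s = "rme_init h vs"
  have L: "inv_lab ?s" unfolding inv_lab_def rme_init_def using vsV by (auto simp: vadd_def)
  have S: "inv_sets ?s" unfolding inv_sets_def rme_init_def by (auto simp: pth_None)
  have Mo: "inv_mode ?s" unfolding inv_mode_def rme_init_def by simp
  have Cl: "inv_claims ?s" unfolding inv_claims_def
  proof (intro conjI allI impI ballI)
    fix q assume q: "st_path E vs vd q"
    then have "q \<noteq> []" "hd q = vs" unfolding st_path_def is_path_def by auto
    then have "q ! 0 = vs" by (simp add: hd_conv_nth)
    then show "Reach ?s q 0 (\<lambda>_. 0)" unfolding Reach_def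
      using \<open>q \<noteq> []\<close>
      by (intro disjI2 exI[of _ 0]) (auto simp: rme_init_def active_def vle_def vadd_def sc_def)
  qed (simp add: rme_init_def)
  show ?thesis using L S Mo Cl unfolding Inv_def by simp
qed

end

context rme begin

lemma claim_hist0:
  "inv_claims s \<Longrightarrow> l \<in> hist s \<Longrightarrow> tpath p \<Longrightarrow> Suc i < length p \<Longrightarrow> p!i = lv (store s l) \<Longrightarrow>
     active s l i p \<or> Reach s p (Suc i) (vadd (lg (store s l)) (c (p!i) (p!Suc i)))"
  unfolding inv_claims_def by blast

lemma claims_transfer:
  assumes Cl: "inv_claims s"
    and cov: "\<And>T. covered s T \<Longrightarrow> covered s' T"
    and wit: "\<And>p l j. tpath p \<Longrightarrow> j < length p \<Longrightarrow> lv (store s l) = p!j \<Longrightarrow> active s l j p \<Longrightarrow> WIT s s' p l j"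
    and hs: "\<And>l. l \<in> hist s' \<Longrightarrow> (l \<in> hist s \<and> lv (store s' l) = lv (store s l) \<and> lg (store s' l) = lg (store s l)) \<or>
              (\<forall>p i. tpath p \<longrightarrow> Suc i < length p \<longrightarrow> p!i = lv (store s' l) \<longrightarrow> active s' l i p)"
  shows "inv_claims s'"
  unfolding inv_claims_def
proof (intro conjI allI impI ballI)
  fix q assume q: "st_path E vs vd q"
  then have tq: "tpath q" unfolding st_path_def tpath_def by simp
  have "Reach s q 0 (\<lambda>_. 0)" using Cl q unfolding inv_claims_def by blast
  moreover have W: "\<And>l j. j < length q \<Longrightarrow> lv (store s l) = q!j \<Longrightarrow> active s l j q \<Longrightarrow> WIT s s' q l j"
    using wit tq by blast
  ultimately show "Reach s' q 0 (\<lambda>_. 0)"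
    apply -
    apply (rule reach_transfer[of q s s'])
    apply (rule tq)
    apply (erule cov)
    apply (rule W, assumption+)
    done
next
  fix l p i assume l: "l \<in> hist s'" and tp: "tpath p" and il: "Suc i < length p" and pl: "p ! i = lv (store s' l)"
  let ?b0 = "vadd (lg (store s' l)) (c (p ! i) (p ! Suc i))"
  have W: "\<And>l j. j < length p \<Longrightarrow> lv (store s l) = p!j \<Longrightarrow> active s l j p \<Longrightarrow> WIT s s' p l j"
    using wit tp by blast
  show "active s' l i p \<or> Reach s' p (Suc i) ?b0"
  proof (cases "l \<in> hist s \<and> lv (store s' l) = lv (store s l) \<and> lg (store s' l) = lg (store s l)")
    case False
    then have "\<forall>p i. tpath p \<longrightarrow> Suc i < length p \<longrightarrow> p!i = lv (store s' l) \<longrightarrow> active s' l i p"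
      using hs[OF l] by argo
    then have "active s' l i p" using tp il pl by simp
    then show ?thesis by simp
  next
    case True
    then have h: "l \<in> hist s" and lvs: "lv (store s' l) = lv (store s l)" and lgs: "lg (store s' l) = lg (store s l)" by auto
    have b0: "?b0 = vadd (lg (store s l)) (c (p ! i) (p ! Suc i))" using lgs by simp
    have "active s l i p \<or> Reach s p (Suc i) (vadd (lg (store s l)) (c (p ! i) (p ! Suc i)))"
      using claim_hist0[OF Cl h tp il] pl lvs by simp
    then show ?thesis
    proof
      assume R: "Reach s p (Suc i) (vadd (lg (store s l)) (c (p ! i) (p ! Suc i)))"
      have "Reach s' p (Suc i) (vadd (lg (store s l)) (c (p ! i) (p ! Suc i)))"
        apply (rule reach_transfer[of p s s'])
        apply (rule tp)
        apply (erule cov)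
        apply (rule W, assumption+)
        apply (rule R)
        done
      then show ?thesis using b0 by simp
    next
      assume act: "active s l i p"
      have W1: "WIT s s' p l i" using W[OF _ _ act] il pl lvs by simp
      show ?thesis using W1 unfolding WIT_def
      proof (elim disjE exE conjE)
        assume "active s' l i p" then show ?thesis by simp
      next
        assume cv: "covered s' (vadd (lg (store s l)) (sc p i (length p - 1)))"
        have "vadd ?b0 (sc p (Suc i) (length p - 1)) = vadd (lg (store s l)) (sc p i (length p - 1))"
          using b0 sc_Suc_left[of i "length p - 1" p] il by (auto simp: vadd_def)
        then show ?thesis using cv unfolding Reach_def by simp
      next
        fix j' b' assume a: "i < j'" "j' < length p" "vle M b' (vadd (lg (store s l)) (sc p i j'))"
          and R0: "Reach s p j' b'"
        have R': "Reach s' p j' b'"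
          apply (rule reach_transfer[of p s s'])
          apply (rule tp)
          apply (erule cov)
          apply (rule W, assumption+)
          apply (rule R0)
          done
        have "vle M b' (vadd ?b0 (sc p (Suc i) j'))"
          using a(3) lgs sc_Suc_left[of i j' p] a(1) unfolding vle_def vadd_def by (simp add: add.assoc)
        then show ?thesis using reach_lift[OF tp R'] a by simp
      next
        fix j' b' assume a: "i < j'" "j' < length p" "vle M b' (vadd (lg (store s l)) (sc p i j'))"
          and R': "Reach s' p j' b'"
        have "vle M b' (vadd ?b0 (sc p (Suc i) j'))"
          using a(3) lgs sc_Suc_left[of i j' p] a(1) unfolding vle_def vadd_def by (simp add: add.assoc)
        then show ?thesis using reach_lift[OF tp R'] a by simp
      next
        assume "l \<notin> hist s" then show ?thesis using h by simp
      qed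
    qed
  qed
qed

lemma InvD:
  assumes "Inv s"
  shows "inv_lab s" "inv_sets s" "inv_mode s" "inv_claims s"
  using assms unfolding Inv_def by auto

lemma opn_fresh: "inv_sets s \<Longrightarrow> l \<in> opn s \<Longrightarrow> l < fresh s" unfolding inv_sets_def by auto
lemma hist_fresh: "inv_sets s \<Longrightarrow> l \<in> hist s \<Longrightarrow> l < fresh s" unfolding inv_sets_def by auto
lemma sol_fresh: "inv_sets s \<Longrightarrow> l \<in> sol s \<Longrightarrow> l < fresh s" unfolding inv_sets_def by auto
lemma lf_eq: "inv_lab s \<Longrightarrow> l < fresh s \<Longrightarrow> lf (store s l) = vadd (lg (store s l)) (h (lv (store s l)))"
  unfolding inv_lab_def by auto
lemma lv_V: "inv_lab s \<Longrightarrow> l < fresh s \<Longrightarrow> lv (store s l) \<in> V"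
  unfolding inv_lab_def by auto
lemma lr_eq: "inv_lab s \<Longrightarrow> l < fresh s \<Longrightarrow> l \<notin> hist s \<Longrightarrow> lr (store s l) = lf (store s l)"
  unfolding inv_lab_def by auto
lemma alpha_hist: "inv_sets s \<Longrightarrow> l \<in> alpha s v \<Longrightarrow> l \<in> hist s \<and> lv (store s l) = v"
  unfolding inv_sets_def by auto
lemma hist_not_vd: "inv_sets s \<Longrightarrow> l \<in> hist s \<Longrightarrow> lv (store s l) \<noteq> vd"
  unfolding inv_sets_def by auto

lemma claim_hist:
  "inv_claims s \<Longrightarrow> l \<in> hist s \<Longrightarrow> tpath p \<Longrightarrow> Suc i < length p \<Longrightarrow> p!i = lv (store s l) \<Longrightarrow>
     active s l i p \<or> Reach s p (Suc i) (vadd (lg (store s l)) (c (p!i) (p!Suc i)))"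
  unfolding inv_claims_def by blast

lemma not_last_Suc: "tpath p \<Longrightarrow> j < length p \<Longrightarrow> p ! j \<noteq> vd \<Longrightarrow> Suc j < length p"
  using tpath_last by (metis Suc_lessI diff_Suc_1)

lemma active_opn_same:
  "l \<in> opn s \<Longrightarrow> l \<in> opn s' \<Longrightarrow> (l \<in> hist s' \<longleftrightarrow> l \<in> hist s) \<Longrightarrow> store s' l = store s l \<Longrightarrow>
   (l \<in> hist s \<longrightarrow> Suc j < length p \<and> lex_le M (lr (store s l)) (fch (store s) l (p ! Suc j))) \<Longrightarrow> active s' l j p"
  unfolding active_def fch_def by auto

lemma fch_ge: "(lv (st l), v') \<in> E \<Longrightarrow> vle M (vadd (lg (st l)) (h (lv (st l)))) (fch st l v')"
  unfolding fch_def vle_def vadd_def using h_cons by (simp add: add.assoc)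

lemma Inv_main_done:
  assumes I: "Inv s" and m: "mode s = Main" and o: "opn s = {}"
  shows "Inv (s\<lparr>mode := Done\<rparr>)"
proof -
  let ?s = "s\<lparr>mode := Done\<rparr>"
  have L: "inv_lab ?s" using InvD(1)[OF I] unfolding inv_lab_def by simp
  have S: "inv_sets ?s" using InvD(2)[OF I] unfolding inv_sets_def by simp
  have Mo: "inv_mode ?s" using o unfolding inv_mode_def by simp
  have Cl: "inv_claims ?s"
  proof (rule claims_transfer[OF InvD(4)[OF I]])
    show "covered s T \<Longrightarrow> covered ?s T" for T unfolding covered_def by simp
    show "l \<in> hist ?s \<Longrightarrow> (l \<in> hist s \<and> lv (store ?s l) = lv (store s l) \<and> lg (store ?s l) = lg (store s l)) \<or>
          (\<forall>p i. tpath p \<longrightarrow> Suc i < length p \<longrightarrow> p!i = lv (store ?s l) \<longrightarrow> active ?s l i p)" for l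
      by simp
    show "WIT s ?s p l j" if "active s l j p" for p l j
      using that m o unfolding active_def by simp
  qed
  show ?thesis using L S Mo Cl unfolding Inv_def by simp
qed

lemma Inv_main_discard:
  assumes I: "Inv s" and m: "mode s = Main" and lo: "l \<in> opn s"
    and chk: "frontier_check M s l \<or> sol_check M s l"
  shows "Inv (s\<lparr>opn := opn s - {l}\<rparr>)"
proof -
  let ?s = "s\<lparr>opn := opn s - {l}\<rparr>"
  have IL: "inv_lab s" and IS: "inv_sets s" and IC: "inv_claims s" using InvD[OF I] by auto
  have L: "inv_lab ?s" using IL unfolding inv_lab_def by simp
  have S: "inv_sets ?s" using IS unfolding inv_sets_def by auto
  have Mo: "inv_mode ?s" using m unfolding inv_mode_def by simp
  have lf: "l < fresh s" using opn_fresh[OF IS lo] .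
  have Cl: "inv_claims ?s"
  proof (rule claims_transfer[OF IC])
    show "covered s T \<Longrightarrow> covered ?s T" for T unfolding covered_def by simp
    show "l \<in> hist ?s \<Longrightarrow> (l \<in> hist s \<and> lv (store ?s l) = lv (store s l) \<and> lg (store ?s l) = lg (store s l)) \<or>
          (\<forall>p i. tpath p \<longrightarrow> Suc i < length p \<longrightarrow> p!i = lv (store ?s l) \<longrightarrow> active ?s l i p)" for l
      by simp
    show "WIT s ?s p l2 j" if tp: "tpath p" and jl: "j < length p" and lv2: "lv (store s l2) = p!j"
      and act: "active s l2 j p" for p l2 j
    proof (cases "l2 = l")
      case False
      have "active ?s l2 j p" using act m False unfolding active_def by simp
      then show ?thesis unfolding WIT_def by simp
    next
      case True
      note l2 = True
      show ?thesis using chk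
      proof
        assume "sol_check M s l"
        then obtain x where x: "x \<in> sol s" "vle M (lg (store s x)) (lf (store s l))" unfolding sol_check_def by blast
        have "vle M (lf (store s l)) (vadd (lg (store s l)) (sc p j (length p - 1)))"
          using lf_eq[OF IL lf] h_le_sc[OF tp jl] lv2 l2 unfolding vle_def vadd_def by auto
        then have "covered ?s (vadd (lg (store s l)) (sc p j (length p - 1)))"
          using x unfolding covered_def vle_def by (auto intro: order_trans)
        then show ?thesis unfolding WIT_def l2 by simp
      next
        assume "frontier_check M s l"
        then obtain l3 where nh: "l \<notin> hist s" and l3: "l3 \<in> alpha s (lv (store s l))" "vle M (lg (store s l3)) (lg (store s l))"
          unfolding frontier_check_def by blast
        have h3: "l3 \<in> hist s" "lv (store s l3) = lv (store s l)" using alpha_hist[OF IS l3(1)] by auto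
        have "p ! j \<noteq> vd" using hist_not_vd[OF IS h3(1)] h3(2) lv2 l2 by simp
        then have sj: "Suc j < length p" using not_last_Suc[OF tp jl] by simp
        have "active s l3 j p \<or> Reach s p (Suc j) (vadd (lg (store s l3)) (c (p!j) (p!Suc j)))"
          using claim_hist[OF IC h3(1) tp sj] h3(2) lv2 l2 by simp
        then show ?thesis
        proof
          assume a3: "active s l3 j p"
          have "l3 \<noteq> l" using nh h3 by auto
          then have "active ?s l3 j p" using a3 m unfolding active_def by simp
          then have "Reach ?s p j (lg (store s l))" unfolding Reach_def
            using jl h3(2) lv2 l2 l3(2) by (intro disjI2 exI[of _ l3] exI[of _ j]) (simp add: sc_empty vadd_def)
          then show ?thesis unfolding WIT_def using nh l2 by simp
        next
          assume R: "Reach s p (Suc j) (vadd (lg (store s l3)) (c (p!j) (p!Suc j)))"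
          have "vle M (vadd (lg (store s l3)) (c (p!j) (p!Suc j))) (vadd (lg (store s l)) (sc p j (Suc j)))"
            using l3(2) unfolding vle_def vadd_def sc_Suc by auto
          then show ?thesis unfolding WIT_def using R sj l2 by blast
        qed
      qed
    qed
  qed
  show ?thesis using L S Mo Cl unfolding Inv_def by simp
qed

end

context rme begin

lemma update_sol_cov:
  assumes "covered s T" "sol s' = update_sol M s l" "\<And>x. x \<in> sol s \<or> x = l \<Longrightarrow> store s' x = store s x"
  shows "covered s' T"
proof -
  obtain x where x: "x \<in> sol s" "vle M (lg (store s x)) T" using assms(1) unfolding covered_def by blast
  show ?thesis
  proof (cases "vdom M (lg (store s l)) (lg (store s x))")
    case True
    then have "vle M (lg (store s l)) T" using x(2) unfolding vdom_def vle_def by (meson order_trans)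
    moreover have "l \<in> sol s'" using assms(2) unfolding update_sol_def by simp
    ultimately show ?thesis unfolding covered_def using assms(3)[of l] by (metis (no_types, lifting))
  next
    case False
    then have "x \<in> sol s'" using assms(2) x(1) unfolding update_sol_def by simp
    then show ?thesis unfolding covered_def using x assms(3)[of x] by (metis (no_types, lifting))
  qed
qed

lemma Inv_main_goal:
  assumes I: "Inv s" and m: "mode s = Main" and lo: "l \<in> opn s"
    and nf: "\<not> frontier_check M s l" and ns: "\<not> sol_check M s l" and lvd: "lv (store s l) = vd"
  shows "Inv (s\<lparr>opn := opn s - {l}, sol := update_sol M s l\<rparr>)"
proof -
  let ?s = "s\<lparr>opn := opn s - {l}, sol := update_sol M s l\<rparr>"
  have IL: "inv_lab s" and IS: "inv_sets s" and IC: "inv_claims s" using InvD[OF I] by auto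
  have lf: "l < fresh s" using opn_fresh[OF IS lo] .
  have lfl: "vle M (lg (store s x)) (lf (store s l)) \<longleftrightarrow> vle M (lg (store s x)) (lg (store s l))" for x
    using lf_eq[OF IL lf] lvd h_vd unfolding vle_def vadd_def by auto
  have L: "inv_lab ?s" using IL unfolding inv_lab_def by simp
  have S: "inv_sets ?s"
  proof -
    have a: "update_sol M s l \<subseteq> {..<fresh s}" using IS lf unfolding inv_sets_def update_sol_def by auto
    have b: "\<forall>x\<in>update_sol M s l. lv (store s x) = vd" using IS lvd unfolding inv_sets_def update_sol_def by auto
    have c: "\<forall>x\<in>update_sol M s l. \<forall>y\<in>update_sol M s l. x \<noteq> y \<longrightarrow> \<not> vle M (lg (store s x)) (lg (store s y))"
    proof (intro ballI impI)
      fix x y assume x: "x \<in> update_sol M s l" and y: "y \<in> update_sol M s l" and xy: "x \<noteq> y"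
      show "\<not> vle M (lg (store s x)) (lg (store s y))"
      proof (cases "x = l")
        case True
        then have "y \<in> sol s" "\<not> vdom M (lg (store s l)) (lg (store s y))" using y xy unfolding update_sol_def by auto
        moreover have "\<not> vle M (lg (store s y)) (lg (store s l))" using ns \<open>y \<in> sol s\<close> lfl unfolding sol_check_def by blast
        ultimately show ?thesis using True unfolding vdom_def vle_def veq_def by force
      next
        case False
        then have xs: "x \<in> sol s" using x unfolding update_sol_def by auto
        show ?thesis
        proof (cases "y = l")
          case True then show ?thesis using ns xs lfl unfolding sol_check_def by blast
        next
          case False
          then have "y \<in> sol s" using y unfolding update_sol_def by auto
          then show ?thesis using IS xs xy unfolding inv_sets_def by blast
        qed
      qed
    qed
    show ?thesis using IS a b c unfolding inv_sets_def by auto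
  qed
  have Mo: "inv_mode ?s" using m unfolding inv_mode_def by simp
  have Cl: "inv_claims ?s"
  proof (rule claims_transfer[OF IC])
    show "covered s T \<Longrightarrow> covered ?s T" for T by (rule update_sol_cov) auto
    show "l \<in> hist ?s \<Longrightarrow> (l \<in> hist s \<and> lv (store ?s l) = lv (store s l) \<and> lg (store ?s l) = lg (store s l)) \<or>
          (\<forall>p i. tpath p \<longrightarrow> Suc i < length p \<longrightarrow> p!i = lv (store ?s l) \<longrightarrow> active ?s l i p)" for l
      by simp
    show "WIT s ?s p l2 j" if tp: "tpath p" and jl: "j < length p" and lv2: "lv (store s l2) = p!j"
      and act: "active s l2 j p" for p l2 j
    proof (cases "l2 = l")
      case False
      have "active ?s l2 j p" using act m False unfolding active_def by simp
      then show ?thesis unfolding WIT_def by simp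
    next
      case True
      have "l \<in> sol ?s" unfolding update_sol_def by simp
      moreover have "vle M (lg (store s l)) (vadd (lg (store s l)) (sc p j (length p - 1)))"
        using sc_nn[OF tp, of "length p - 1"] jl unfolding vle_def vadd_def by auto
      ultimately have "covered ?s (vadd (lg (store s l)) (sc p j (length p - 1)))" unfolding covered_def by auto
      then show ?thesis unfolding WIT_def True by simp
    qed
  qed
  show ?thesis using L S Mo Cl unfolding Inv_def by simp
qed

subsection \<open>main_pid is impossible\<close>

lemma no_pid:
  assumes I: "Inv s" and lo: "l \<in> opn s" and v: "vlt M (h (lv (store s l))) (\<lambda>_. 0)"
  shows False
proof -
  have "lv (store s l) \<in> V" using lv_V[OF InvD(1)[OF I] opn_fresh[OF InvD(2)[OF I] lo]] .
  then have "0 \<le> h (lv (store s l)) 0" using h_nn Mpos by auto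
  moreover have "h (lv (store s l)) 0 < 0" using v Mpos unfolding vlt_def by auto
  ultimately show False by simp
qed

end

context rme begin

lemma dom_alpha: "inv_sets s \<Longrightarrow> a \<in> hist s \<Longrightarrow> \<exists>a'\<in>alpha s (lv (store s a)). vle M (lg (store s a')) (lg (store s a))"
  unfolding inv_sets_def by blast

lemma Inv_main_exp:
  assumes I: "Inv s" and m: "mode s = Main" and lo: "l \<in> opn s"
    and nf: "\<not> frontier_check M s l" and lvd: "lv (store s l) \<noteq> vd"
    and xs: "set xs = {v'. (lv (store s l), v') \<in> E}"
  shows "Inv ((update_frontier M (s\<lparr>opn := opn s - {l}\<rparr>) l)\<lparr>mode := Exp l xs None\<rparr>)"
proof -
  let ?s = "(update_frontier M (s\<lparr>opn := opn s - {l}\<rparr>) l)\<lparr>mode := Exp l xs None\<rparr>"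
  define v where "v = lv (store s l)"
  define A where "A = (if l \<in> hist s then alpha s else (alpha s)(v := {l2 \<in> alpha s v. \<not> vdom M (lg (store s l)) (lg (store s l2))} \<union> {l}))"
  have F: "store ?s = store s" "fresh ?s = fresh s" "opn ?s = opn s - {l}" "hist ?s = insert l (hist s)"
    "sol ?s = sol s" "mode ?s = Exp l xs None" "alpha ?s = A"
    unfolding A_def v_def by (auto simp: update_frontier_def Let_def)
  have IL: "inv_lab s" and IS: "inv_sets s" and IC: "inv_claims s" using InvD[OF I] by auto
  have lf: "l < fresh s" using opn_fresh[OF IS lo] .
  have L: "inv_lab ?s" using IL unfolding inv_lab_def F by auto
  have nf': "l \<notin> hist s \<Longrightarrow> \<forall>l2\<in>alpha s v. \<not> vle M (lg (store s l2)) (lg (store s l))"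
    using nf unfolding frontier_check_def v_def by blast
  have S: "inv_sets ?s"
  proof -
    have s1: "opn ?s \<subseteq> {..<fresh ?s}" "hist ?s \<subseteq> {..<fresh ?s}" "sol ?s \<subseteq> {..<fresh ?s}"
      using IS lf unfolding inv_sets_def F by auto
    have s2: "\<forall>l\<in>hist ?s. lv (store ?s l) \<noteq> vd" using IS lvd unfolding inv_sets_def F by auto
    have s3: "\<forall>v0. \<forall>l0\<in>alpha ?s v0. l0 \<in> hist ?s \<and> lv (store ?s l0) = v0"
      using IS unfolding inv_sets_def F A_def v_def by auto
    have s4: "\<forall>a\<in>hist ?s. \<exists>a'\<in>alpha ?s (lv (store ?s a)). vle M (lg (store ?s a')) (lg (store ?s a))"
    proof
      fix a assume a: "a \<in> hist ?s"
      show "\<exists>a'\<in>alpha ?s (lv (store ?s a)). vle M (lg (store ?s a')) (lg (store ?s a))"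
      proof (cases "l \<in> hist s")
        case True
        then have "a \<in> hist s" using a F by auto
        then obtain a' where "a' \<in> alpha s (lv (store s a))" "vle M (lg (store s a')) (lg (store s a))"
          using dom_alpha[OF IS] by blast
        moreover have "A = alpha s" unfolding A_def using True by simp
        ultimately show ?thesis unfolding F by blast
      next
        case nh: False
        show ?thesis
        proof (cases "a = l")
          case True
          have "l \<in> A v" unfolding A_def using nh by simp
          moreover have "vle M (lg (store s l)) (lg (store s l))" by (simp add: vle_def)
          ultimately show ?thesis unfolding F using True v_def by blast
        next
          case False
          then have ah: "a \<in> hist s" using a F by auto
          then obtain a' where a': "a' \<in> alpha s (lv (store s a))" "vle M (lg (store s a')) (lg (store s a))"
            using dom_alpha[OF IS] by blast
          show ?thesis
          proof (cases "lv (store s a) = v")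
            case False
            then have "A (lv (store s a)) = alpha s (lv (store s a))" unfolding A_def by simp
            then show ?thesis using a' unfolding F by auto
          next
            case True
            show ?thesis
            proof (cases "vdom M (lg (store s l)) (lg (store s a'))")
              case True
              then have "vle M (lg (store s l)) (lg (store s a))" using a'(2) unfolding vdom_def vle_def by (meson order_trans)
              moreover have "l \<in> A v" unfolding A_def using nh by simp
              ultimately show ?thesis using \<open>lv (store s a) = v\<close> unfolding F by auto
            next
              case False
              then have "a' \<in> A v" unfolding A_def using nh a'(1) \<open>lv (store s a) = v\<close> by simp
              then show ?thesis using a'(2) \<open>lv (store s a) = v\<close> unfolding F by auto
            qed
          qed
        qed
      qed
    qed
    have s5: "\<forall>a\<in>hist ?s. \<forall>b\<in>hist ?s. a \<noteq> b \<longrightarrow> lv (store ?s a) = lv (store ?s b) \<longrightarrow> \<not> veq M (lg (store ?s a)) (lg (store ?s b))"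
    proof (intro ballI impI)
      fix a b assume a: "a \<in> hist ?s" and b: "b \<in> hist ?s" and ab: "a \<noteq> b" and lab: "lv (store ?s a) = lv (store ?s b)"
      have key: "\<not> veq M (lg (store s l)) (lg (store s b0))" if k1: "l \<notin> hist s" and k2: "b0 \<in> hist s" and k3: "lv (store s b0) = v" for b0
      proof
        assume eq: "veq M (lg (store s l)) (lg (store s b0))"
        obtain b' where "b' \<in> alpha s (lv (store s b0))" "vle M (lg (store s b')) (lg (store s b0))"
          using dom_alpha[OF IS k2] by blast
        then have "b' \<in> alpha s v" "vle M (lg (store s b')) (lg (store s l))"
          using k3 eq unfolding vle_def veq_def by auto
        then show False using nf' k1 by blast
      qed
      show "\<not> veq M (lg (store ?s a)) (lg (store ?s b))"
      proof (cases "a \<in> hist s \<and> b \<in> hist s")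
        case True then show ?thesis using IS ab lab unfolding inv_sets_def F by blast
      next
        case False
        then have "(a = l \<and> l \<notin> hist s \<and> b \<in> hist s) \<or> (b = l \<and> l \<notin> hist s \<and> a \<in> hist s)"
          using a b ab F by auto
        then show ?thesis
        proof
          assume "a = l \<and> l \<notin> hist s \<and> b \<in> hist s"
          then show ?thesis using key[of b] lab unfolding F v_def by auto
        next
          assume "b = l \<and> l \<notin> hist s \<and> a \<in> hist s"
          then show ?thesis using key[of a] lab unfolding F v_def veq_def by auto
        qed
      qed
    qed
    have s6: "\<forall>l\<in>opn ?s \<union> hist ?s. 0 < l \<longrightarrow> the (lpar (store ?s l)) \<in> hist ?s"
      "\<forall>l\<in>opn ?s \<union> hist ?s. distinct (pth (store ?s) l)"
    proof -
      have "opn ?s \<union> hist ?s = opn s \<union> hist s" using lo unfolding F by auto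
      then show "\<forall>l\<in>opn ?s \<union> hist ?s. 0 < l \<longrightarrow> the (lpar (store ?s l)) \<in> hist ?s"
        "\<forall>l\<in>opn ?s \<union> hist ?s. distinct (pth (store ?s) l)"
        using IS unfolding inv_sets_def F by auto
    qed
    have s7: "\<forall>x\<in>sol ?s. lv (store ?s x) = vd"
      "\<forall>x\<in>sol ?s. \<forall>y\<in>sol ?s. x \<noteq> y \<longrightarrow> \<not> vle M (lg (store ?s x)) (lg (store ?s y))"
      using IS unfolding inv_sets_def F by auto
    show ?thesis unfolding inv_sets_def using s1 s2 s3 s4 s5 s6 s7 by blast
  qed
  have Mo: "inv_mode ?s" unfolding inv_mode_def F using xs unfolding succ_def by auto
  have newact: "active ?s l i p" if tp: "tpath p" and il: "Suc i < length p" and pl: "p!i = lv (store s l)"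
    and pend: "l \<in> hist s \<longrightarrow> lex_le M (lr (store s l)) (fch (store s) l (p ! Suc i))" for p i
  proof -
    have e: "(lv (store s l), p ! Suc i) \<in> E" using tpath_edge[OF tp il] pl by simp
    have "lex_le M (lr (store s l)) (fch (store s) l (p ! Suc i))"
    proof (cases "l \<in> hist s")
      case True then show ?thesis using pend by simp
    next
      case False
      then have "lr (store s l) = vadd (lg (store s l)) (h (lv (store s l)))"
        using lr_eq[OF IL lf] lf_eq[OF IL lf] by simp
      then show ?thesis using vle_lex_le[OF fch_ge[of "store s" l, OF e]] by simp
    qed
    then show ?thesis unfolding active_def F using il e xs by auto
  qed
  have Cl: "inv_claims ?s"
  proof (rule claims_transfer[OF IC])
    show "covered s T \<Longrightarrow> covered ?s T" for T unfolding covered_def F by simp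
    show "(l0 \<in> hist s \<and> lv (store ?s l0) = lv (store s l0) \<and> lg (store ?s l0) = lg (store s l0)) \<or>
          (\<forall>p i. tpath p \<longrightarrow> Suc i < length p \<longrightarrow> p!i = lv (store ?s l0) \<longrightarrow> active ?s l0 i p)"
      if "l0 \<in> hist ?s" for l0
    proof (cases "l0 \<in> hist s")
      case True then show ?thesis unfolding F by simp
    next
      case False
      then have "l0 = l" using that F by auto
      then show ?thesis using newact False unfolding F by auto
    qed
    show "WIT s ?s p l2 j" if tp: "tpath p" and jl: "j < length p" and lv2: "lv (store s l2) = p!j"
      and act: "active s l2 j p" for p l2 j
    proof (cases "l2 = l")
      case False
      have "active ?s l2 j p" using act m False unfolding active_def F fch_def by auto
      then show ?thesis unfolding WIT_def F by simp
    next
      case True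
      have a0: "l \<in> hist s \<longrightarrow> Suc j < length p \<and> lex_le M (lr (store s l)) (fch (store s) l (p ! Suc j))"
        using act m True unfolding active_def by auto
      have sj: "Suc j < length p"
      proof (cases "l \<in> hist s")
        case True then show ?thesis using a0 by simp
      next
        case False then show ?thesis using not_last_Suc[OF tp jl] lvd lv2 \<open>l2 = l\<close> by simp
      qed
      have "active ?s l j p" using newact[OF tp sj] a0 lv2 True by simp
      then show ?thesis unfolding WIT_def F True by simp
    qed
  qed
  show ?thesis using L S Mo Cl unfolding Inv_def by simp
qed

end

context rme begin

lemma child_simps:
  "lv (child c h s l v') = v'"
  "lg (child c h s l v') = vadd (lg (store s l)) (c (lv (store s l)) v')"
  "lf (child c h s l v') = fch (store s) l v'"
  "lr (child c h s l v') = fch (store s) l v'"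
  "lpar (child c h s l v') = Some l"
  unfolding child_def fch_def Let_def by simp_all

lemma fch_lf: "fch st l v' = vadd (vadd (lg (st l)) (c (lv (st l)) v')) (h v')"
  unfolding fch_def by simp

lemma hist_distinct: "inv_sets s \<Longrightarrow> a \<in> hist s \<Longrightarrow> b \<in> hist s \<Longrightarrow> a \<noteq> b \<Longrightarrow> lv (store s a) = lv (store s b) \<Longrightarrow> \<not> veq M (lg (store s a)) (lg (store s b))"
  unfolding inv_sets_def by blast
lemma sol_vd: "inv_sets s \<Longrightarrow> a \<in> sol s \<Longrightarrow> lv (store s a) = vd"
  unfolding inv_sets_def by blast
lemma sol_anti: "inv_sets s \<Longrightarrow> a \<in> sol s \<Longrightarrow> b \<in> sol s \<Longrightarrow> a \<noteq> b \<Longrightarrow> \<not> vle M (lg (store s a)) (lg (store s b))"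
  unfolding inv_sets_def by blast
lemma par_hist: "inv_sets s \<Longrightarrow> l \<in> opn s \<union> hist s \<Longrightarrow> 0 < l \<Longrightarrow> the (lpar (store s l)) \<in> hist s"
  unfolding inv_sets_def by blast
lemma pth_dist: "inv_sets s \<Longrightarrow> l \<in> opn s \<union> hist s \<Longrightarrow> distinct (pth (store s) l)"
  unfolding inv_sets_def by blast

lemma Inv_exp_child_gen:
  assumes I: "Inv s" and m: "mode s = Exp l (v' # todo) rn"
    and x: "x = child c h s l v'" and s1: "s1 = add_label s x"
    and s': "s' = s1\<lparr>opn := Op, mode := Exp l todo R\<rparr>"
    and br: "(Op = opn s \<and> R = rn \<and> lex_less M (lf x) (lr (store s l))) \<or>
             (Op = opn s \<and> R = rn \<and> (frontier_check M s1 (fresh s) \<or> sol_check M s1 (fresh s))) \<or>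
             (Op = opn s \<and> R = Some (lexmin M rn (lf x)) \<and> lex_less M (vadd (lr (store s l)) C) (lf x)) \<or>
             (Op = insert (fresh s) (opn s) \<and> R = rn \<and> \<not> frontier_check M s1 (fresh s))"
  shows "Inv s'"
proof -
  have IL: "inv_lab s" and IS: "inv_sets s" and IM: "inv_mode s" and IC: "inv_claims s" using InvD[OF I] by auto
  define F where "F = fresh s"
  have lh: "l \<in> hist s" and lno: "l \<notin> opn s" and todo: "set (v' # todo) \<subseteq> succ (lv (store s l))"
    and rnc: "\<forall>r. rn = Some r \<longrightarrow> (\<exists>v0\<in>succ (lv (store s l)). r = fch (store s) l v0 \<and> lex_less M (lr (store s l)) r)"
    using IM m unfolding inv_mode_def by auto
  have lF: "l < F" using hist_fresh[OF IS lh] F_def by simp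
  have ev': "(lv (store s l), v') \<in> E" using todo unfolding succ_def by auto
  have v'V: "v' \<in> V" using ev' EV by auto
  have Fs: "store s' = (store s)(F := x)" "fresh s' = Suc F" "opn s' = Op" "hist s' = hist s"
    "alpha s' = alpha s" "sol s' = sol s" "mode s' = Exp l todo R"
    using s' s1 unfolding add_label_def F_def by auto
  have st_old: "store s' l0 = store s l0" if "l0 < F" for l0 using that Fs(1) by auto
  have st_new: "store s' F = x" using Fs(1) by simp
  have xs: "lv x = v'" "lg x = vadd (lg (store s l)) (c (lv (store s l)) v')" "lf x = fch (store s) l v'"
    "lr x = fch (store s) l v'" "lpar x = Some l" using x child_simps by auto
  have s1st: "store s1 = (store s)(F := x)" "hist s1 = hist s" "alpha s1 = alpha s" "sol s1 = sol s"
    using s1 unfolding add_label_def F_def by auto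
  have Fnh: "F \<notin> hist s" using IS F_def unfolding inv_sets_def by auto
  have solF: "sol_check M s1 F \<longleftrightarrow> (\<exists>x0\<in>sol s. vle M (lg (store s x0)) (lf x))"
  proof -
    have "\<forall>x0\<in>sol s. x0 < F" using IS F_def unfolding inv_sets_def by auto
    then show ?thesis unfolding sol_check_def s1st by auto
  qed
  have frF: "frontier_check M s1 F \<longleftrightarrow> (\<exists>l3\<in>alpha s v'. vle M (lg (store s l3)) (lg x))"
  proof -
    have "\<forall>l3\<in>alpha s v'. l3 < F" using alpha_hist[OF IS] hist_fresh[OF IS] F_def by blast
    then show ?thesis unfolding frontier_check_def s1st using Fnh xs(1) by auto
  qed
  have Osub: "Op \<subseteq> insert F (opn s)" using br F_def by auto
  have lgx: "vle M (lg (store s l)) (lg x)" using xs(2) cnn'[OF ev'] unfolding vle_def vadd_def by auto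
  have L: "inv_lab s'"
  proof -
    have a: "0 < fresh s'" "lv (store s' 0) = vs" "lg (store s' 0) = (\<lambda>_. 0)" "lpar (store s' 0) = None"
    proof -
      have F0: "0 < F" using IL F_def unfolding inv_lab_def by simp
      show "0 < fresh s'" "lv (store s' 0) = vs" "lg (store s' 0) = (\<lambda>_. 0)" "lpar (store s' 0) = None"
        using IL st_old[OF F0] Fs unfolding inv_lab_def by auto
    qed
    have b: "\<forall>l0. 0 < l0 \<longrightarrow> l0 < fresh s' \<longrightarrow> (\<exists>p. lpar (store s' l0) = Some p \<and> p < l0 \<and>
        (lv (store s' p), lv (store s' l0)) \<in> E \<and>
        lg (store s' l0) = vadd (lg (store s' p)) (c (lv (store s' p)) (lv (store s' l0))))"
    proof (intro allI impI)
      fix l0 assume l0: "0 < l0" "l0 < fresh s'"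
      show "\<exists>p. lpar (store s' l0) = Some p \<and> p < l0 \<and> (lv (store s' p), lv (store s' l0)) \<in> E \<and>
        lg (store s' l0) = vadd (lg (store s' p)) (c (lv (store s' p)) (lv (store s' l0)))"
      proof (cases "l0 = F")
        case True
        then show ?thesis using st_new st_old[OF lF] xs ev' lF by (intro exI[of _ l]) auto
      next
        case False
        then have l0F: "l0 < F" using l0 Fs by auto
        then obtain p where p: "lpar (store s l0) = Some p" "p < l0" "(lv (store s p), lv (store s l0)) \<in> E"
          "lg (store s l0) = vadd (lg (store s p)) (c (lv (store s p)) (lv (store s l0)))"
          using IL l0(1) F_def unfolding inv_lab_def by blast
        then show ?thesis using st_old[OF l0F] st_old[of p] l0F by (intro exI[of _ p]) auto
      qed
    qed
    have c: "\<forall>l0 < fresh s'. lf (store s' l0) = vadd (lg (store s' l0)) (h (lv (store s' l0))) \<and> lv (store s' l0) \<in> V"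
    proof (intro allI impI)
      fix l0 assume "l0 < fresh s'"
      then have "l0 < F \<or> l0 = F" using Fs by auto
      then show "lf (store s' l0) = vadd (lg (store s' l0)) (h (lv (store s' l0))) \<and> lv (store s' l0) \<in> V"
      proof
        assume "l0 < F" then show ?thesis using st_old IL F_def unfolding inv_lab_def by auto
      next
        assume "l0 = F" then show ?thesis using st_new xs v'V fch_lf by simp
      qed
    qed
    have d: "\<forall>l0 < fresh s'. l0 \<notin> hist s' \<longrightarrow> lr (store s' l0) = lf (store s' l0)"
    proof (intro allI impI)
      fix l0 assume "l0 < fresh s'" "l0 \<notin> hist s'"
      then have "(l0 < F \<and> l0 \<notin> hist s) \<or> l0 = F" using Fs by auto
      then show "lr (store s' l0) = lf (store s' l0)"
      proof
        assume "l0 < F \<and> l0 \<notin> hist s" then show ?thesis using st_old IL F_def unfolding inv_lab_def by auto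
      next
        assume "l0 = F" then show ?thesis using st_new xs by simp
      qed
    qed
    show ?thesis unfolding inv_lab_def using a b c d by blast
  qed
  have histF: "\<forall>l0\<in>hist s. l0 < F" "\<forall>l0\<in>sol s. l0 < F" "\<forall>l0\<in>opn s. l0 < F"
    using IS F_def unfolding inv_sets_def by auto
  have pth_old: "pth (store s') l0 = pth (store s) l0" if "l0 < F" for l0
    by (rule pth_cong) (use that st_old in auto)
  have Fno: "F \<notin> opn s" using histF by auto
  have FOp: "Op = insert F (opn s) \<and> R = rn \<and> \<not> frontier_check M s1 F" if "F \<in> Op"
    using br that Fno F_def by (elim disjE) auto
  have S: "inv_sets s'"
  proof -
    have s1: "opn s' \<subseteq> {..<fresh s'}" "hist s' \<subseteq> {..<fresh s'}" "sol s' \<subseteq> {..<fresh s'}"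
    proof -
      have "opn s' \<subseteq> {..<Suc F}" using Osub histF Fs(3) by fastforce
      then show "opn s' \<subseteq> {..<fresh s'}" "hist s' \<subseteq> {..<fresh s'}" "sol s' \<subseteq> {..<fresh s'}"
        using histF Fs by auto
    qed
    have s2: "\<forall>l\<in>hist s'. lv (store s' l) \<noteq> vd"
      "\<forall>v. \<forall>l\<in>alpha s' v. l \<in> hist s' \<and> lv (store s' l) = v"
      "\<forall>a\<in>hist s'. \<exists>a'\<in>alpha s' (lv (store s' a)). vle M (lg (store s' a')) (lg (store s' a))"
      "\<forall>a\<in>hist s'. \<forall>b\<in>hist s'. a \<noteq> b \<longrightarrow> lv (store s' a) = lv (store s' b) \<longrightarrow> \<not> veq M (lg (store s' a)) (lg (store s' b))"
      "\<forall>x\<in>sol s'. lv (store s' x) = vd"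
      "\<forall>x\<in>sol s'. \<forall>y\<in>sol s'. x \<noteq> y \<longrightarrow> \<not> vle M (lg (store s' x)) (lg (store s' y))"
    proof -
      have ah: "\<forall>v. \<forall>l0\<in>alpha s v. l0 < F" using alpha_hist[OF IS] hist_fresh[OF IS] F_def by blast
      show "\<forall>l\<in>hist s'. lv (store s' l) \<noteq> vd"
      proof
        fix l0 assume "l0 \<in> hist s'"
        then have "l0 \<in> hist s" "l0 < F" using Fs histF by auto
        then show "lv (store s' l0) \<noteq> vd" using hist_not_vd[OF IS] st_old by simp
      qed
      show "\<forall>v. \<forall>l\<in>alpha s' v. l \<in> hist s' \<and> lv (store s' l) = v"
      proof (intro allI ballI)
        fix v l0 assume "l0 \<in> alpha s' v"
        then have "l0 \<in> alpha s v" using Fs by simp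
        then have "l0 \<in> hist s" "lv (store s l0) = v" "l0 < F" using alpha_hist[OF IS] ah by auto
        then show "l0 \<in> hist s' \<and> lv (store s' l0) = v" using st_old Fs by simp
      qed
      show "\<forall>a\<in>hist s'. \<exists>a'\<in>alpha s' (lv (store s' a)). vle M (lg (store s' a')) (lg (store s' a))"
      proof
        fix a assume "a \<in> hist s'"
        then have a: "a \<in> hist s" "a < F" using Fs histF by auto
        obtain a' where a': "a' \<in> alpha s (lv (store s a))" "vle M (lg (store s a')) (lg (store s a))"
          using dom_alpha[OF IS a(1)] by blast
        have "a' < F" using ah a'(1) by blast
        then have "a' \<in> alpha s' (lv (store s' a))" "vle M (lg (store s' a')) (lg (store s' a))"
          using a' st_old[OF a(2)] st_old[of a'] Fs by auto
        then show "\<exists>a'\<in>alpha s' (lv (store s' a)). vle M (lg (store s' a')) (lg (store s' a))" by blast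
      qed
      show "\<forall>a\<in>hist s'. \<forall>b\<in>hist s'. a \<noteq> b \<longrightarrow> lv (store s' a) = lv (store s' b) \<longrightarrow> \<not> veq M (lg (store s' a)) (lg (store s' b))"
      proof (intro ballI impI)
        fix a b assume ab: "a \<in> hist s'" "b \<in> hist s'" "a \<noteq> b" "lv (store s' a) = lv (store s' b)"
        then have ab2: "a \<in> hist s" "b \<in> hist s" "a < F" "b < F" using Fs histF by auto
        then have "lv (store s a) = lv (store s b)" using ab(4) st_old[of a] st_old[of b] by simp
        then have "\<not> veq M (lg (store s a)) (lg (store s b))" using hist_distinct[OF IS ab2(1,2) ab(3)] by simp
        then show "\<not> veq M (lg (store s' a)) (lg (store s' b))" using st_old[OF ab2(3)] st_old[OF ab2(4)] by simp
      qed
      show "\<forall>x\<in>sol s'. lv (store s' x) = vd"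
      proof
        fix l0 assume "l0 \<in> sol s'"
        then have "l0 \<in> sol s" "l0 < F" using Fs histF by auto
        then show "lv (store s' l0) = vd" using sol_vd[OF IS] st_old by simp
      qed
      show "\<forall>x\<in>sol s'. \<forall>y\<in>sol s'. x \<noteq> y \<longrightarrow> \<not> vle M (lg (store s' x)) (lg (store s' y))"
      proof (intro ballI impI)
        fix a b assume "a \<in> sol s'" "b \<in> sol s'" "a \<noteq> b"
        then have "a \<in> sol s" "b \<in> sol s" "a < F" "b < F" "a \<noteq> b" using Fs histF by auto
        then show "\<not> vle M (lg (store s' a)) (lg (store s' b))" using sol_anti[OF IS] st_old by auto
      qed
    qed
    have s3: "\<forall>l\<in>opn s' \<union> hist s'. 0 < l \<longrightarrow> the (lpar (store s' l)) \<in> hist s'"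
    proof (intro ballI impI)
      fix l0 assume "l0 \<in> opn s' \<union> hist s'" "0 < l0"
      then have "(l0 \<in> opn s \<union> hist s \<and> l0 < F) \<or> l0 = F" using Osub histF unfolding Fs by blast
      then show "the (lpar (store s' l0)) \<in> hist s'"
      proof
        assume "l0 \<in> opn s \<union> hist s \<and> l0 < F"
        then show ?thesis using par_hist[OF IS _ \<open>0 < l0\<close>] st_old Fs by auto
      next
        assume "l0 = F" then show ?thesis using st_new xs lh Fs by simp
      qed
    qed
    have s4: "\<forall>l\<in>opn s' \<union> hist s'. distinct (pth (store s') l)"
    proof
      fix l0 assume "l0 \<in> opn s' \<union> hist s'"
      then have "(l0 \<in> opn s \<union> hist s \<and> l0 < F) \<or> (l0 = F \<and> F \<in> Op)"
        using Osub histF unfolding Fs by blast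
      then show "distinct (pth (store s') l0)"
      proof
        assume "l0 \<in> opn s \<union> hist s \<and> l0 < F"
        then show ?thesis using pth_dist[OF IS] pth_old by auto
      next
        assume a: "l0 = F \<and> F \<in> Op"
        then have nfr: "\<not> frontier_check M s1 F" using FOp by blast
        have "pth (store s') F = pth (store s') l @ [v']"
          using pth_Some[of "store s'" F l] st_new xs lF by simp
        also have "\<dots> = pth (store s) l @ [v']" using pth_old[OF lF] by simp
        finally have eq: "pth (store s') F = pth (store s) l @ [v']" .
        have dl: "distinct (pth (store s) l)" using pth_dist[OF IS] lh by auto
        have "v' \<notin> set (pth (store s) l)"
        proof
          assume "v' \<in> set (pth (store s) l)"
          then obtain b where b: "b \<in> hist s" "lv (store s b) = v'" "vle M (lg (store s b)) (lg (store s l))"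
            using anc[OF IL IS lh] by blast
          obtain b' where b': "b' \<in> alpha s v'" "vle M (lg (store s b')) (lg (store s b))"
            using dom_alpha[OF IS b(1)] b(2) by blast
          have "vle M (lg (store s b')) (lg x)" using b'(2) b(3) lgx unfolding vle_def by (meson order_trans)
          then have "frontier_check M s1 F" using frF b'(1) by blast
          then show False using nfr by simp
        qed
        then show ?thesis using a eq dl by simp
      qed
    qed
    show ?thesis unfolding inv_sets_def using s1 s2 s3 s4 by blast
  qed
  have Mo: "inv_mode s'"
  proof -
    have a: "l \<in> hist s'" "l \<notin> opn s'" "set todo \<subseteq> succ (lv (store s' l))"
      using lh lno Osub lF todo st_old[OF lF] Fs by auto
    have fe: "fch (store s') l = fch (store s) l" "lr (store s' l) = lr (store s l)" "lv (store s' l) = lv (store s l)"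
      using st_old[OF lF] unfolding fch_def by (auto simp: fun_eq_iff)
    have b: "\<forall>r. R = Some r \<longrightarrow> (\<exists>v0\<in>succ (lv (store s' l)). r = fch (store s') l v0 \<and> lex_less M (lr (store s' l)) r)"
    proof (intro allI impI)
      fix r assume R: "R = Some r"
      show "\<exists>v0\<in>succ (lv (store s' l)). r = fch (store s') l v0 \<and> lex_less M (lr (store s' l)) r"
      proof (cases "R = rn")
        case True then show ?thesis using rnc R fe by auto
      next
        case False
        then have R2: "R = Some (lexmin M rn (lf x))" "lex_less M (vadd (lr (store s l)) C) (lf x)" using br by auto
        then have r: "r = lexmin M rn (lf x)" using R by simp
        have ll: "lex_less M (lr (store s l)) (lf x)" using lex_lemma_C[OF Cnn R2(2)] .
        from lexmin_cases[of M rn "lf x"] show ?thesis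
        proof
          assume "lexmin M rn (lf x) = lf x"
          then show ?thesis using r ll xs todo fe by auto
        next
          assume "rn = Some (lexmin M rn (lf x))"
          then show ?thesis using rnc r fe by auto
        qed
      qed
    qed
    show ?thesis unfolding inv_mode_def using a b Fs by auto
  qed
  have opn_sub: "opn s \<subseteq> Op" using br by auto
  have fch_old: "fch (store s') l0 = fch (store s) l0" if "l0 < F" for l0
    using st_old[OF that] unfolding fch_def by simp
  have lgx_eq: "lg x = vadd (lg (store s l)) (c (lv (store s l)) v')" using xs by simp
  have Cl: "inv_claims s'"
  proof (rule claims_transfer[OF IC])
    show "covered s T \<Longrightarrow> covered s' T" for T
      unfolding covered_def using st_old histF Fs by auto
    show "(l0 \<in> hist s \<and> lv (store s' l0) = lv (store s l0) \<and> lg (store s' l0) = lg (store s l0)) \<or>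
          (\<forall>p i. tpath p \<longrightarrow> Suc i < length p \<longrightarrow> p!i = lv (store s' l0) \<longrightarrow> active s' l0 i p)"
      if "l0 \<in> hist s'" for l0
      using that Fs histF st_old by auto
    show "WIT s s' p l2 j" if tp: "tpath p" and jl: "j < length p" and lv2: "lv (store s l2) = p!j"
      and act: "active s l2 j p" for p l2 j
    proof -
      have "(l2 \<in> opn s \<and> (l2 \<in> hist s \<longrightarrow> Suc j < length p \<and> lex_le M (lr (store s l2)) (fch (store s) l2 (p ! Suc j)))) \<or>
            (l2 = l \<and> Suc j < length p \<and>
              ((p ! Suc j \<in> set (v' # todo) \<and> lex_le M (lr (store s l)) (fch (store s) l (p ! Suc j))) \<or>
               (\<exists>r. rn = Some r \<and> lex_le M r (fch (store s) l (p ! Suc j)))))"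
        using act m unfolding active_def by auto
      then show ?thesis
      proof (elim disjE conjE)
        assume a: "l2 \<in> opn s" "l2 \<in> hist s \<longrightarrow> Suc j < length p \<and> lex_le M (lr (store s l2)) (fch (store s) l2 (p ! Suc j))"
        have l2F: "l2 < F" using a histF by auto
        have "active s' l2 j p" unfolding active_def using a opn_sub st_old[OF l2F] fch_old[OF l2F] Fs by auto
        then show ?thesis unfolding WIT_def using st_old[OF l2F] by simp
      next
        assume a: "l2 = l" "Suc j < length p" and rr: "\<exists>r. rn = Some r \<and> lex_le M r (fch (store s) l (p ! Suc j))"
        then obtain r where r: "rn = Some r" "lex_le M r (fch (store s) l (p ! Suc j))" by blast
        have "\<exists>r'. R = Some r' \<and> lex_le M r' (fch (store s) l (p ! Suc j))"
        proof (cases "R = rn")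
          case True then show ?thesis using r by auto
        next
          case False
          then have "R = Some (lexmin M rn (lf x))" using br by auto
          moreover have "lex_le M (lexmin M rn (lf x)) r" using lexmin_le2[OF r(1)] .
          ultimately show ?thesis using r(2) lex_le_trans by blast
        qed
        then have "active s' l j p" unfolding active_def using a Fs fch_old[OF lF] by auto
        then show ?thesis unfolding WIT_def using st_old[OF lF] a by simp
      next
        assume a: "l2 = l" "Suc j < length p" "p ! Suc j \<in> set (v' # todo)"
          and pend: "lex_le M (lr (store s l)) (fch (store s) l (p ! Suc j))"
        show ?thesis
        proof (cases "p ! Suc j \<in> set todo")
          case True
          then have "active s' l j p" unfolding active_def using a pend Fs fch_old[OF lF] st_old[OF lF] by auto
          then show ?thesis unfolding WIT_def using st_old[OF lF] a by simp
        next
          case False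
          then have pv: "p ! Suc j = v'" using a(3) by simp
          have pj: "p ! j = lv (store s l)" using lv2 a(1) by simp
          have pend': "lex_le M (lr (store s l)) (lf x)" using pend pv xs by simp
          have bx: "vle M (lg x) (vadd (lg (store s l)) (sc p j (Suc j)))"
            using lgx_eq pj pv unfolding sc_Suc vle_def by simp
          from br consider (b1) "lex_less M (lf x) (lr (store s l))"
            | (b2) "Op = opn s" "R = rn" "frontier_check M s1 (fresh s) \<or> sol_check M s1 (fresh s)"
            | (b3) "Op = opn s" "R = Some (lexmin M rn (lf x))"
            | (b4) "Op = insert (fresh s) (opn s)" "R = rn" by blast
          then show ?thesis
          proof cases
            case b1
            then show ?thesis using lex_le_not_less[OF pend'] b1 by simp
          next
            case b2
            from b2(3)[unfolded disj_commute[of "frontier_check M s1 (fresh s)"]] show ?thesis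
            proof
              assume "sol_check M s1 (fresh s)"
              then obtain x0 where x0: "x0 \<in> sol s" "vle M (lg (store s x0)) (lf x)" using solF F_def by auto
              have "vle M (lf x) (vadd (lg (store s l)) (sc p j (length p - 1)))"
                unfolding vle_def
              proof (intro allI impI)
                fix i assume i: "i < M"
                have "h (p ! Suc j) i \<le> sc p (Suc j) (length p - 1) i" using h_le_sc[OF tp a(2) i] .
                moreover have "sc p j (length p - 1) i = c (p!j) (p!Suc j) i + sc p (Suc j) (length p - 1) i"
                  using sc_Suc_left[of j "length p - 1" p i] a(2) by simp
                ultimately show "lf x i \<le> vadd (lg (store s l)) (sc p j (length p - 1)) i"
                  using xs(3) pj pv unfolding fch_def vadd_def by simp
              qed
              then have "covered s' (vadd (lg (store s l)) (sc p j (length p - 1)))"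
                unfolding covered_def using x0 st_old histF Fs unfolding vle_def
                by (metis (no_types, lifting) order_trans)
              then show ?thesis unfolding WIT_def a(1) by simp
            next
              assume "frontier_check M s1 (fresh s)"
              then obtain l3 where l3: "l3 \<in> alpha s v'" "vle M (lg (store s l3)) (lg x)" using frF F_def by auto
              have h3: "l3 \<in> hist s" "lv (store s l3) = v'" using alpha_hist[OF IS l3(1)] by auto
              have "p ! Suc j \<noteq> vd" using hist_not_vd[OF IS h3(1)] h3(2) pv by simp
              then have ssj: "Suc (Suc j) < length p" using not_last_Suc[OF tp a(2)] by simp
              have "active s l3 (Suc j) p \<or> Reach s p (Suc (Suc j)) (vadd (lg (store s l3)) (c (p!Suc j) (p!Suc (Suc j))))"
                using claim_hist[OF IC h3(1) tp ssj] h3(2) pv by simp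
              then have R1: "Reach s p (Suc j) (lg x)"
              proof
                assume "active s l3 (Suc j) p"
                then show ?thesis unfolding Reach_def using a(2) h3(2) pv l3(2)
                  by (intro disjI2 exI[of _ l3] exI[of _ "Suc j"]) (simp add: sc_empty vadd_def)
              next
                assume R2: "Reach s p (Suc (Suc j)) (vadd (lg (store s l3)) (c (p!Suc j) (p!Suc (Suc j))))"
                have "vle M (vadd (lg (store s l3)) (c (p!Suc j) (p!Suc (Suc j)))) (vadd (lg x) (sc p (Suc j) (Suc (Suc j))))"
                  using l3(2) unfolding vle_def vadd_def sc_Suc by auto
                then show ?thesis using reach_lift[OF tp R2 _ ssj] by simp
              qed
              show ?thesis unfolding WIT_def using R1 bx a by blast
            qed
          next
            case b3
            then have "active s' l j p" unfolding active_def using a Fs fch_old[OF lF] pv xs lexmin_le1[of M rn "lf x"] by auto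
            then show ?thesis unfolding WIT_def using st_old[OF lF] a by simp
          next
            case b4
            then have "active s' F (Suc j) p" unfolding active_def using Fs F_def Fnh by auto
            then have "Reach s' p (Suc j) (lg x)" unfolding Reach_def using a(2) st_new xs pv
              by (intro disjI2 exI[of _ F] exI[of _ "Suc j"]) (simp add: sc_empty vadd_def vle_def)
            then show ?thesis unfolding WIT_def using bx a by blast
          qed
        qed
      qed
    qed
  qed
  show ?thesis using L S Mo Cl unfolding Inv_def by simp
qed

end

context rme begin

lemma Inv_exp_end_inf:
  assumes I: "Inv s" and m: "mode s = Exp l [] None"
  shows "Inv (s\<lparr>mode := Main\<rparr>)"
proof -
  let ?s = "s\<lparr>mode := Main\<rparr>"
  have IL: "inv_lab s" and IS: "inv_sets s" and IC: "inv_claims s" using InvD[OF I] by auto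
  have L: "inv_lab ?s" using IL unfolding inv_lab_def by simp
  have S: "inv_sets ?s" using IS unfolding inv_sets_def by simp
  have Mo: "inv_mode ?s" unfolding inv_mode_def by simp
  have Cl: "inv_claims ?s"
  proof (rule claims_transfer[OF IC])
    show "covered s T \<Longrightarrow> covered ?s T" for T unfolding covered_def by simp
    show "l0 \<in> hist ?s \<Longrightarrow> (l0 \<in> hist s \<and> lv (store ?s l0) = lv (store s l0) \<and> lg (store ?s l0) = lg (store s l0)) \<or>
          (\<forall>p i. tpath p \<longrightarrow> Suc i < length p \<longrightarrow> p!i = lv (store ?s l0) \<longrightarrow> active ?s l0 i p)" for l0
      by simp
    show "WIT s ?s p l2 j" if "active s l2 j p" for p l2 j
    proof -
      have "active ?s l2 j p" using that m unfolding active_def by auto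
      then show ?thesis unfolding WIT_def by simp
    qed
  qed
  show ?thesis using L S Mo Cl unfolding Inv_def by simp
qed

lemma Inv_exp_end_reinsert:
  assumes I: "Inv s" and m: "mode s = Exp l [] (Some r)"
  shows "Inv (s\<lparr>store := (store s)(l := (store s l)\<lparr>lr := r\<rparr>), opn := insert l (opn s), mode := Main\<rparr>)"
proof -
  let ?s = "s\<lparr>store := (store s)(l := (store s l)\<lparr>lr := r\<rparr>), opn := insert l (opn s), mode := Main\<rparr>"
  have IL: "inv_lab s" and IS: "inv_sets s" and IM: "inv_mode s" and IC: "inv_claims s" using InvD[OF I] by auto
  have lh: "l \<in> hist s" and lno: "l \<notin> opn s" using IM m unfolding inv_mode_def by auto
  have lF: "l < fresh s" using hist_fresh[OF IS lh] .
  have sf: "lv (store ?s i) = lv (store s i)" "lg (store ?s i) = lg (store s i)" "lf (store ?s i) = lf (store s i)"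
    "lpar (store ?s i) = lpar (store s i)" for i by auto
  have lro: "i \<noteq> l \<Longrightarrow> lr (store ?s i) = lr (store s i)" for i by auto
  have fchs: "fch (store ?s) i = fch (store s) i" for i unfolding fch_def using sf by simp
  have L4: "\<forall>i < fresh ?s. i \<notin> hist ?s \<longrightarrow> lr (store ?s i) = lf (store ?s i)"
  proof (intro allI impI)
    fix i assume "i < fresh ?s" "i \<notin> hist ?s"
    then have "i \<noteq> l" "i < fresh s" "i \<notin> hist s" using lh by auto
    then show "lr (store ?s i) = lf (store ?s i)" using lro[of i] sf(3)[of i] lr_eq[OF IL] by simp
  qed
  have L: "inv_lab ?s"
    using IL L4 unfolding inv_lab_def sf by (simp del: fun_upd_apply)
  have pth_eq: "pth (store ?s) i = pth (store s) i" for i by (rule pth_cong) (simp only: sf)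
  have S: "inv_sets ?s"
  proof -
    have "opn ?s \<union> hist ?s = opn s \<union> hist s" using lh by auto
    moreover have "opn ?s \<subseteq> {..<fresh ?s}" using IS lF unfolding inv_sets_def by auto
    ultimately show ?thesis using IS unfolding inv_sets_def sf pth_eq by (simp del: fun_upd_apply)
  qed
  have Mo: "inv_mode ?s" unfolding inv_mode_def by simp
  have Cl: "inv_claims ?s"
  proof (rule claims_transfer[OF IC])
    show "covered s T \<Longrightarrow> covered ?s T" for T unfolding covered_def sf by simp
    show "l0 \<in> hist ?s \<Longrightarrow> (l0 \<in> hist s \<and> lv (store ?s l0) = lv (store s l0) \<and> lg (store ?s l0) = lg (store s l0)) \<or>
          (\<forall>p i. tpath p \<longrightarrow> Suc i < length p \<longrightarrow> p!i = lv (store ?s l0) \<longrightarrow> active ?s l0 i p)" for l0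
      using sf by simp
    show "WIT s ?s p l2 j" if act: "active s l2 j p" for p l2 j
    proof -
      have "(l2 \<in> opn s \<and> (l2 \<in> hist s \<longrightarrow> Suc j < length p \<and> lex_le M (lr (store s l2)) (fch (store s) l2 (p ! Suc j)))) \<or>
            (l2 = l \<and> Suc j < length p \<and> lex_le M r (fch (store s) l (p ! Suc j)))"
        using act m unfolding active_def by auto
      then have "active ?s l2 j p"
      proof
        assume a: "l2 \<in> opn s \<and> (l2 \<in> hist s \<longrightarrow> Suc j < length p \<and> lex_le M (lr (store s l2)) (fch (store s) l2 (p ! Suc j)))"
        then have "l2 \<noteq> l" using lno by auto
        then show ?thesis unfolding active_def using a lro fchs by simp
      next
        assume a: "l2 = l \<and> Suc j < length p \<and> lex_le M r (fch (store s) l (p ! Suc j))"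
        then show ?thesis unfolding active_def using lh fchs by simp
      qed
      then show ?thesis unfolding WIT_def sf by simp
    qed
  qed
  show ?thesis using L S Mo Cl unfolding Inv_def by simp
qed

lemma step_Inv:
  assumes st: "rme_step E c h vd M C (\<lambda>_. 0) s s'" and I: "Inv s"
  shows "Inv s'"
  using st
proof (cases rule: rme_step.cases)
  case (main_done) then show ?thesis using Inv_main_done[OF I] by simp
next
  case (main_discard l) then show ?thesis using Inv_main_discard[OF I] by simp
next
  case (main_goal l) then show ?thesis using Inv_main_goal[OF I] by simp
next
  case (main_pid l s1 L) then show ?thesis using no_pid[OF I] by blast
next
  case (main_exp l xs) then show ?thesis using Inv_main_exp[OF I] by simp
next
  case (exp_child l v' todo rn x s1 l')
  show ?thesis
  proof (cases "lex_less M (lf x) (lr (store s l))")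
    case True
    then show ?thesis using exp_child
      by (intro Inv_exp_child_gen[OF I exp_child(2,3,4), where Op = "opn s" and R = rn]) (auto simp: add_label_def)
  next
    case F1: False
    show ?thesis
    proof (cases "frontier_check M s1 l' \<or> sol_check M s1 l'")
      case True
      then show ?thesis using exp_child F1
        by (intro Inv_exp_child_gen[OF I exp_child(2,3,4), where Op = "opn s" and R = rn]) (auto simp: add_label_def)
    next
      case F2: False
      show ?thesis
      proof (cases "lex_less M (vadd (lr (store s l)) C) (lf x)")
        case True
        then show ?thesis using exp_child F1 F2
          by (intro Inv_exp_child_gen[OF I exp_child(2,3,4), where Op = "opn s" and R = "Some (lexmin M rn (lf x))"]) (auto simp: add_label_def)
      next
        case False
        then show ?thesis using exp_child F1 F2
          by (intro Inv_exp_child_gen[OF I exp_child(2,3,4), where Op = "insert (fresh s) (opn s)" and R = rn]) (auto simp: add_label_def)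
      qed
    qed
  qed
next
  case (exp_end_inf l) then show ?thesis using Inv_exp_end_inf[OF I] by simp
next
  case (exp_end_reinsert l r) then show ?thesis using Inv_exp_end_reinsert[OF I] by simp
next
  case (pidT_end lp T) then show ?thesis using I unfolding Inv_def inv_mode_def by auto
next
  case (pidT_iter lp T) then show ?thesis using I unfolding Inv_def inv_mode_def by auto
next
  case (pidIn_end lp T Tn) then show ?thesis using I unfolding Inv_def inv_mode_def by auto
next
  case (pidIn_skip lp T Tn l stk) then show ?thesis using I unfolding Inv_def inv_mode_def by auto
next
  case (pidIn_exp lp T Tn l stk xs) then show ?thesis using I unfolding Inv_def inv_mode_def by auto
next
  case (pidE_child lp T Tn stk l v' todo x s1 l') then show ?thesis using I unfolding Inv_def inv_mode_def by auto
next
  case (pidE_end lp T Tn stk l) then show ?thesis using I unfolding Inv_def inv_mode_def by auto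
qed

lemma reach_Inv: "(rme_step E c h vd M C (\<lambda>_. 0))\<^sup>*\<^sup>* (rme_init h vs) s \<Longrightarrow> Inv s"
  by (induction rule: rtranclp_induct) (auto intro: Inv_init step_Inv)

end

context rme begin

lemma fin_opn: "inv_sets s \<Longrightarrow> finite (opn s)"
  unfolding inv_sets_def by (meson finite_lessThan finite_subset)
lemma fin_hist: "inv_sets s \<Longrightarrow> finite (hist s)"
  unfolding inv_sets_def by (meson finite_lessThan finite_subset)

lemma sc_path_cost: "sc q 0 (length q - 1) = path_cost c q"
  unfolding sc_def path_cost_def by (simp add: atLeast0LessThan)

lemma Done_cover:
  assumes I: "Inv s" and d: "mode s = Done" and q: "st_path E vs vd q"
  shows "\<exists>y\<in>sol s. vle M (lg (store s y)) (path_cost c q)"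
proof -
  have o: "opn s = {}" using InvD(3)[OF I] d unfolding inv_mode_def by auto
  have "Reach s q 0 (\<lambda>_. 0)" using InvD(4)[OF I] q unfolding inv_claims_def by blast
  then have "covered s (vadd (\<lambda>_. 0) (sc q 0 (length q - 1)))"
    unfolding Reach_def active_def using o d by auto
  moreover have "vadd (\<lambda>_. 0) (sc q 0 (length q - 1)) = path_cost c q"
    using sc_path_cost unfolding vadd_def by (simp add: fun_eq_iff)
  ultimately show ?thesis unfolding covered_def by simp
qed

lemma result_paths_eq: "Inv s \<Longrightarrow> result_paths s = pth (store s) ` sol s"
proof -
  assume I: "Inv s"
  have IL: "inv_lab s" and IS: "inv_sets s" using InvD[OF I] by auto
  show ?thesis unfolding result_paths_def
  proof (intro set_eqI iffI)
    fix p assume "p \<in> {p. \<exists>l\<in>sol s. represents (store s) l p}"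
    then obtain l where "l \<in> sol s" "represents (store s) l p" by blast
    then show "p \<in> pth (store s) ` sol s" using repr_pth[OF IL] sol_fresh[OF IS] by blast
  next
    fix p assume "p \<in> pth (store s) ` sol s"
    then obtain l where "l \<in> sol s" "p = pth (store s) l" by blast
    then show "p \<in> {p. \<exists>l\<in>sol s. represents (store s) l p}" using pth_props[OF IL] sol_fresh[OF IS] by blast
  qed
qed

lemma sol_path:
  assumes I: "Inv s" and x: "x \<in> sol s"
  shows "st_path E vs vd (pth (store s) x) \<and> path_cost c (pth (store s) x) = lg (store s x)"
proof -
  have IL: "inv_lab s" and IS: "inv_sets s" using InvD[OF I] by auto
  have xf: "x < fresh s" using sol_fresh[OF IS x] .
  show ?thesis using pth_props[OF IL xf] last_pth[of "store s" x] sol_vd[OF IS x]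
    unfolding st_path_def by simp
qed

lemma result_correct:
  assumes I: "Inv s" and d: "mode s = Done"
  shows "max_cost_unique_pareto_set E c M vs vd (result_paths s)"
proof -
  have IS: "inv_sets s" using InvD[OF I] by auto
  let ?P = "pth (store s) ` sol s"
  have P: "result_paths s = ?P" using result_paths_eq[OF I] .
  have sub: "?P \<subseteq> pareto_paths E c M vs vd"
  proof
    fix p assume "p \<in> ?P"
    then obtain x where x: "x \<in> sol s" "p = pth (store s) x" by blast
    have sp: "st_path E vs vd p" and pc: "path_cost c p = lg (store s x)" using sol_path[OF I x(1)] x(2) by auto
    have "\<not> (\<exists>q. st_path E vs vd q \<and> vdom M (path_cost c q) (path_cost c p))"
    proof
      assume "\<exists>q. st_path E vs vd q \<and> vdom M (path_cost c q) (path_cost c p)"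
      then obtain q where q: "st_path E vs vd q" "vdom M (path_cost c q) (lg (store s x))" using pc by auto
      obtain y where y: "y \<in> sol s" "vle M (lg (store s y)) (path_cost c q)" using Done_cover[OF I d q(1)] by blast
      have yx: "vle M (lg (store s y)) (lg (store s x))" using y(2) q(2) unfolding vdom_def vle_def by (meson order_trans)
      show False
      proof (cases "y = x")
        case True
        then show False using y(2) q(2) unfolding vdom_def vle_def veq_def by (meson order_antisym)
      next
        case False then show False using sol_anti[OF IS y(1) x(1) False] yx by simp
      qed
    qed
    then show "p \<in> pareto_paths E c M vs vd" unfolding pareto_paths_def using sp by simp
  qed
  have cu: "cost_unique c M ?P"
    unfolding cost_unique_def
  proof (intro ballI impI)
    fix p q assume "p \<in> ?P" "q \<in> ?P" "p \<noteq> q"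
    then obtain x y where xy: "x \<in> sol s" "y \<in> sol s" "p = pth (store s) x" "q = pth (store s) y" "x \<noteq> y" by blast
    then have "\<not> vle M (lg (store s x)) (lg (store s y))" using sol_anti[OF IS] by blast
    then show "\<not> veq M (path_cost c p) (path_cost c q)" using sol_path[OF I xy(1)] sol_path[OF I xy(2)] xy
      unfolding veq_def vle_def by auto
  qed
  have mx: "\<forall>Q. ?P \<subseteq> Q \<and> Q \<subseteq> pareto_paths E c M vs vd \<and> cost_unique c M Q \<longrightarrow> Q = ?P"
  proof (intro allI impI)
    fix Q assume Q: "?P \<subseteq> Q \<and> Q \<subseteq> pareto_paths E c M vs vd \<and> cost_unique c M Q"
    have "Q \<subseteq> ?P"
    proof
      fix q assume qQ: "q \<in> Q"
      then have qp: "q \<in> pareto_paths E c M vs vd" using Q by auto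
      then have sq: "st_path E vs vd q" unfolding pareto_paths_def by simp
      obtain y where y: "y \<in> sol s" "vle M (lg (store s y)) (path_cost c q)" using Done_cover[OF I d sq] by blast
      let ?py = "pth (store s) y"
      have spy: "st_path E vs vd ?py" and pcy: "path_cost c ?py = lg (store s y)" using sol_path[OF I y(1)] by auto
      have "\<not> vdom M (path_cost c ?py) (path_cost c q)" using qp spy unfolding pareto_paths_def by blast
      then have eq: "veq M (path_cost c ?py) (path_cost c q)" using y(2) pcy unfolding vdom_def by simp
      have pyQ: "?py \<in> Q" using Q y(1) by blast
      show "q \<in> ?P"
      proof (rule ccontr)
        assume "q \<notin> ?P"
        then have "q \<noteq> ?py" using y(1) by blast
        then have "\<not> veq M (path_cost c q) (path_cost c ?py)" using Q qQ pyQ unfolding cost_unique_def by blast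
        then show False using eq unfolding veq_def by auto
      qed
    qed
    then show "Q = ?P" using Q by blast
  qed
  show ?thesis unfolding max_cost_unique_pareto_set_def P using sub cu mx by blast
qed

end

context rme begin

definition NB :: nat where "NB = card {xs. set xs \<subseteq> V \<and> length xs \<le> card V}"

lemma hist_bound: assumes I: "Inv s" shows "card (hist s) \<le> NB"
proof -
  have IL: "inv_lab s" and IS: "inv_sets s" using InvD[OF I] by auto
  have inj: "inj_on (pth (store s)) (hist s)"
  proof (rule inj_onI)
    fix a b assume a: "a \<in> hist s" and b: "b \<in> hist s" and e: "pth (store s) a = pth (store s) b"
    have "lv (store s a) = lv (store s b)" using e last_pth by metis
    moreover have "lg (store s a) = lg (store s b)"
      using e pth_props[OF IL hist_fresh[OF IS a]] pth_props[OF IL hist_fresh[OF IS b]] by metis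
    ultimately show "a = b" using hist_distinct[OF IS a b] unfolding veq_def by auto
  qed
  have img: "pth (store s) ` hist s \<subseteq> {xs. set xs \<subseteq> V \<and> length xs \<le> card V}"
  proof
    fix p assume "p \<in> pth (store s) ` hist s"
    then obtain a where a: "a \<in> hist s" "p = pth (store s) a" by blast
    have sv: "set p \<subseteq> V" using pth_props[OF IL hist_fresh[OF IS a(1)]] a(2) by simp
    have "distinct p" using pth_dist[OF IS] a by auto
    then have "length p = card (set p)" by (simp add: distinct_card)
    also have "\<dots> \<le> card V" using card_mono[OF finV sv] .
    finally show "p \<in> {xs. set xs \<subseteq> V \<and> length xs \<le> card V}" using sv by simp
  qed
  show ?thesis unfolding NB_def by (rule card_inj_on_le[OF inj img finite_lists_length_le[OF finV]])
qed

definition Rset :: "'v rstate \<Rightarrow> nat \<Rightarrow> 'v set" where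
  "Rset s l = {v' \<in> succ (lv (store s l)). lex_less M (lr (store s l)) (fch (store s) l v')}"

definition m0 :: "'v rstate \<Rightarrow> nat" where "m0 s = (if mode s = Done then 0 else 1)"
definition m1 :: "'v rstate \<Rightarrow> nat" where "m1 s = NB - card (hist s)"
definition m2 :: "'v rstate \<Rightarrow> nat" where "m2 s = (\<Sum>l\<in>hist s. card (Rset s l))"
definition mex :: "'v rstate \<Rightarrow> nat" where "mex s = (case mode s of Exp _ _ _ \<Rightarrow> 1 | _ \<Rightarrow> 0)"
definition m3 :: "'v rstate \<Rightarrow> nat" where "m3 s = 2 * card (opn s \<inter> hist s) + mex s"
definition m4 :: "'v rstate \<Rightarrow> nat" where "m4 s = (case mode s of Exp _ t _ \<Rightarrow> length t | _ \<Rightarrow> 0)"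
definition m5 :: "'v rstate \<Rightarrow> nat" where "m5 s = card (opn s - hist s)"

abbreviation "ms \<equiv> [m0, m1, m2, m3, m4, m5]"

lemma Rset_cong: "store s' l = store s l \<Longrightarrow> Rset s' l = Rset s l"
  unfolding Rset_def fch_def by simp

lemma dec_pop:
  assumes I: "Inv s" and m: "mode s = Main" and lo: "l \<in> opn s"
    and s': "opn s' = opn s - {l}" "hist s' = hist s" "store s' = store s" "mode s' = Main"
  shows "(s', s) \<in> measures ms"
proof -
  have IS: "inv_sets s" using InvD[OF I] by auto
  have fo: "finite (opn s)" using fin_opn[OF IS] .
  have e: "m0 s' = m0 s" "m1 s' = m1 s" "m2 s' = m2 s" "mex s' = 0" "mex s = 0" "m4 s' = 0" "m4 s = 0"
    unfolding m0_def m1_def m2_def mex_def m4_def using s' m Rset_cong[of s' _ s] by auto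
  show ?thesis
  proof (cases "l \<in> hist s")
    case True
    have "opn s' \<inter> hist s' = (opn s \<inter> hist s) - {l}" using s' by auto
    then have "card (opn s' \<inter> hist s') < card (opn s \<inter> hist s)"
      using card_Diff1_less[of "opn s \<inter> hist s" l] fo True lo by auto
    then have "m3 s' < m3 s" unfolding m3_def using e by simp
    then show ?thesis using e by simp
  next
    case False
    have "opn s' \<inter> hist s' = opn s \<inter> hist s" using s' False by auto
    then have e3: "m3 s' = m3 s" unfolding m3_def using e by simp
    have "opn s' - hist s' = (opn s - hist s) - {l}" using s' by auto
    then have "m5 s' < m5 s" unfolding m5_def using card_Diff1_less[of "opn s - hist s" l] fo False lo by auto
    then show ?thesis using e e3 by simp
  qed
qed

lemma dec_exp:
  assumes I: "Inv s" and I': "Inv s'" and m: "mode s = Main" and lo: "l \<in> opn s"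
    and s': "s' = (update_frontier M (s\<lparr>opn := opn s - {l}\<rparr>) l)\<lparr>mode := Exp l xs None\<rparr>"
  shows "(s', s) \<in> measures ms"
proof -
  have IS: "inv_sets s" using InvD[OF I] by auto
  have fo: "finite (opn s)" using fin_opn[OF IS] .
  have fh: "finite (hist s)" using fin_hist[OF IS] .
  have F: "store s' = store s" "opn s' = opn s - {l}" "hist s' = insert l (hist s)" "mode s' = Exp l xs None"
    using s' by (auto simp: update_frontier_def Let_def)
  have e0: "m0 s' = m0 s" unfolding m0_def using F m by simp
  show ?thesis
  proof (cases "l \<in> hist s")
    case True
    have h: "hist s' = hist s" using F True by auto
    have e: "m1 s' = m1 s" "m2 s' = m2 s" unfolding m1_def m2_def using h F Rset_cong[of s' _ s] by auto
    have "opn s' \<inter> hist s' = (opn s \<inter> hist s) - {l}" using F h by auto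
    then have "card (opn s' \<inter> hist s') < card (opn s \<inter> hist s)"
      using card_Diff1_less[of "opn s \<inter> hist s" l] fo True lo by auto
    moreover have "mex s' = 1" "mex s = 0" unfolding mex_def using F m by auto
    ultimately have "m3 s' < m3 s" unfolding m3_def by simp
    then show ?thesis using e e0 by simp
  next
    case False
    have "card (hist s') = Suc (card (hist s))" using F False fh by simp
    moreover have "card (hist s') \<le> NB" using hist_bound[OF I'] .
    ultimately have "m1 s' < m1 s" unfolding m1_def by simp
    then show ?thesis using e0 by simp
  qed
qed

lemma dec_child:
  assumes I: "Inv s" and m: "mode s = Exp l (v' # todo) rn"
    and s': "store s' = (store s)(fresh s := x)" "hist s' = hist s" "mode s' = Exp l todo R"
       "opn s' = opn s \<or> opn s' = insert (fresh s) (opn s)"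
  shows "(s', s) \<in> measures ms"
proof -
  have IS: "inv_sets s" using InvD[OF I] by auto
  have hf: "\<forall>l0\<in>hist s. l0 < fresh s" using hist_fresh[OF IS] by blast
  have Fnh: "fresh s \<notin> hist s" using hf by auto
  have e0: "m0 s' = m0 s" "m1 s' = m1 s" unfolding m0_def m1_def using s' m by auto
  have e2: "m2 s' = m2 s" unfolding m2_def s'(2)
  proof (rule sum.cong)
    fix l0 assume "l0 \<in> hist s"
    then have "store s' l0 = store s l0" using hf s'(1) by auto
    then show "card (Rset s' l0) = card (Rset s l0)" using Rset_cong by metis
  qed simp
  have "opn s' \<inter> hist s' = opn s \<inter> hist s" using s'(2,4) Fnh by auto
  moreover have "mex s' = mex s" unfolding mex_def using s' m by simp
  ultimately have e3: "m3 s' = m3 s" unfolding m3_def by simp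
  have "m4 s' < m4 s" unfolding m4_def using s' m by simp
  then show ?thesis using e0 e2 e3 by simp
qed

lemma dec_end_inf:
  assumes I: "Inv s" and m: "mode s = Exp l [] None"
  shows "(s\<lparr>mode := Main\<rparr>, s) \<in> measures ms"
proof -
  let ?s = "s\<lparr>mode := Main\<rparr>"
  have e: "m0 ?s = m0 s" "m1 ?s = m1 s" "m2 ?s = m2 s" unfolding m0_def m1_def m2_def Rset_def using m by auto
  have "m3 ?s < m3 s" unfolding m3_def mex_def using m by simp
  then show ?thesis using e by simp
qed

lemma dec_reinsert:
  assumes I: "Inv s" and m: "mode s = Exp l [] (Some r)"
  shows "(s\<lparr>store := (store s)(l := (store s l)\<lparr>lr := r\<rparr>), opn := insert l (opn s), mode := Main\<rparr>, s) \<in> measures ms"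
proof -
  let ?s = "s\<lparr>store := (store s)(l := (store s l)\<lparr>lr := r\<rparr>), opn := insert l (opn s), mode := Main\<rparr>"
  have IS: "inv_sets s" and IM: "inv_mode s" using InvD[OF I] by auto
  have lh: "l \<in> hist s" and v0: "\<exists>v0\<in>succ (lv (store s l)). r = fch (store s) l v0 \<and> lex_less M (lr (store s l)) r"
    using IM m unfolding inv_mode_def by auto
  then obtain v0 where v0: "v0 \<in> succ (lv (store s l))" "r = fch (store s) l v0" "lex_less M (lr (store s l)) r" by blast
  have fh: "finite (hist s)" using fin_hist[OF IS] .
  have e: "m0 ?s = m0 s" "m1 ?s = m1 s" unfolding m0_def m1_def using m by auto
  have fchs: "fch (store ?s) l = fch (store s) l" unfolding fch_def by (simp add: fun_eq_iff)
  have Rl: "Rset ?s l = {v' \<in> succ (lv (store s l)). lex_less M r (fch (store s) l v')}"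
    unfolding Rset_def using fchs by simp
  have sub: "Rset ?s l < Rset s l"
  proof
    show "Rset ?s l \<subseteq> Rset s l"
    proof
      fix v assume "v \<in> Rset ?s l"
      then have "v \<in> succ (lv (store s l))" "lex_less M r (fch (store s) l v)" unfolding Rl by auto
      then show "v \<in> Rset s l" unfolding Rset_def using lex_less_trans[OF v0(3)] by simp
    qed
    have "v0 \<in> Rset s l" unfolding Rset_def using v0 by simp
    moreover have "v0 \<notin> Rset ?s l" unfolding Rl using v0(2) lex_less_irrefl[of M r] by simp
    ultimately show "Rset ?s l \<noteq> Rset s l" by blast
  qed
  have fR: "finite (Rset s l)" unfolding Rset_def by (rule finite_subset[OF _ finite_succ]) auto
  have "card (Rset ?s l) < card (Rset s l)"
    by (rule psubset_card_mono[OF fR sub])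
  then have "m2 ?s < m2 s" unfolding m2_def
  proof -
    assume lt: "card (Rset ?s l) < card (Rset s l)"
    have "\<forall>l0\<in>hist s. card (Rset ?s l0) \<le> card (Rset s l0)"
    proof
      fix l0 assume "l0 \<in> hist s"
      show "card (Rset ?s l0) \<le> card (Rset s l0)"
      proof (cases "l0 = l")
        case True then show ?thesis using lt by simp
      next
        case False then have "store ?s l0 = store s l0" by simp
        then have "Rset ?s l0 = Rset s l0" by (rule Rset_cong)
        then show ?thesis by simp
      qed
    qed
    moreover have "\<exists>a\<in>hist s. card (Rset ?s a) < card (Rset s a)" using lh lt by blast
    ultimately have "(\<Sum>l0\<in>hist s. card (Rset ?s l0)) < (\<Sum>l0\<in>hist s. card (Rset s l0))"
      by (rule sum_strict_mono_ex1[OF fh])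
    then show "(\<Sum>l\<in>hist ?s. card (Rset ?s l)) < (\<Sum>l\<in>hist s. card (Rset s l))" by simp
  qed
  then show ?thesis using e by simp
qed

end

context rme begin

lemma step_dec:
  assumes st: "rme_step E c h vd M C (\<lambda>_. 0) s s'" and I: "Inv s"
  shows "(s', s) \<in> measures ms"
  using st
proof (cases rule: rme_step.cases)
  case (main_done) then show ?thesis by (simp add: m0_def)
next
  case (main_discard l) then show ?thesis by (intro dec_pop[OF I, of l]) auto
next
  case (main_goal l) then show ?thesis by (intro dec_pop[OF I, of l]) auto
next
  case (main_pid l s1 L) then show ?thesis using no_pid[OF I] by blast
next
  case (main_exp l xs) then show ?thesis using dec_exp[OF I step_Inv[OF st I]] by blast
next
  case (exp_child l v' todo rn x s1 l')
  have f: "store s' = (store s)(fresh s := x)" "hist s' = hist s"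
    "opn s' = opn s \<or> opn s' = insert (fresh s) (opn s)" "\<exists>R. mode s' = Exp l todo R"
    using exp_child by (auto simp: add_label_def)
  then obtain R where "mode s' = Exp l todo R" by blast
  then show ?thesis using dec_child[OF I exp_child(2) f(1,2)] f(3) by blast
next
  case (exp_end_inf l) then show ?thesis using dec_end_inf[OF I] by simp
next
  case (exp_end_reinsert l r) then show ?thesis using dec_reinsert[OF I] by simp
next
  case (pidT_end lp T) then show ?thesis using I unfolding Inv_def inv_mode_def by auto
next
  case (pidT_iter lp T) then show ?thesis using I unfolding Inv_def inv_mode_def by auto
next
  case (pidIn_end lp T Tn) then show ?thesis using I unfolding Inv_def inv_mode_def by auto
next
  case (pidIn_skip lp T Tn l stk) then show ?thesis using I unfolding Inv_def inv_mode_def by auto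
next
  case (pidIn_exp lp T Tn l stk xs) then show ?thesis using I unfolding Inv_def inv_mode_def by auto
next
  case (pidE_child lp T Tn stk l v' todo x s1 l') then show ?thesis using I unfolding Inv_def inv_mode_def by auto
next
  case (pidE_end lp T Tn stk l) then show ?thesis using I unfolding Inv_def inv_mode_def by auto
qed

lemma lex_min_exists: "finite A \<Longrightarrow> A \<noteq> {} \<Longrightarrow> \<exists>l\<in>A. \<forall>l2\<in>A. lex_le M (f l) (f l2)"
proof (induction A rule: finite_ne_induct)
  case (singleton x) then show ?case by (simp add: lex_le_refl)
next
  case (insert x F)
  then obtain m where m: "m \<in> F" "\<forall>l2\<in>F. lex_le M (f m) (f l2)" by blast
  show ?case
  proof (cases "lex_le M (f x) (f m)")
    case True
    then have "\<forall>l2\<in>insert x F. lex_le M (f x) (f l2)" using m lex_le_trans lex_le_refl by blast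
    then show ?thesis by blast
  next
    case False
    then have "lex_le M (f m) (f x)" using lex_total[of M "f x" "f m"] unfolding lex_le_def by blast
    then have "\<forall>l2\<in>insert x F. lex_le M (f m) (f l2)" using m by blast
    then show ?thesis using m by blast
  qed
qed

lemma progress:
  assumes I: "Inv s"
  shows "mode s = Done \<or> (\<exists>s'. rme_step E c h vd M C (\<lambda>_. 0) s s')"
proof -
  have IS: "inv_sets s" and IM: "inv_mode s" using InvD[OF I] by auto
  have "mode s = Main \<or> mode s = Done \<or> (\<exists>l todo rn. mode s = Exp l todo rn)"
    using IM unfolding inv_mode_def by blast
  then show ?thesis
  proof (elim disjE exE)
    assume m: "mode s = Main"
    show ?thesis
    proof (cases "opn s = {}")
      case True then show ?thesis using rme_step.main_done[OF m True] by blast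
    next
      case False
      obtain l where l: "l \<in> opn s" "\<forall>l2\<in>opn s. lex_le M (lr (store s l)) (lr (store s l2))"
        using lex_min_exists[OF fin_opn[OF IS] False, of "\<lambda>l. lr (store s l)"] by blast
      show ?thesis
      proof (cases "frontier_check M s l \<or> sol_check M s l")
        case True then show ?thesis using rme_step.main_discard[OF m l(1) l(2) True] by blast
      next
        case F1: False
        then have nf: "\<not> frontier_check M s l" "\<not> sol_check M s l" by auto
        show ?thesis
        proof (cases "lv (store s l) = vd")
          case True then show ?thesis using rme_step.main_goal[OF m l(1) l(2) nf(1) nf(2) True] by blast
        next
          case F2: False
          show ?thesis
          proof (cases "vlt M (h (lv (store s l))) (\<lambda>_. 0)")
            case True then show ?thesis using no_pid[OF I l(1) True] by blast
          next
            case F3: False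
            obtain xs where xs: "set xs = {v'. (lv (store s l), v') \<in> E}" "distinct xs"
              using finite_distinct_list[OF finite_succ[unfolded succ_def]] by blast
            show ?thesis using rme_step.main_exp[where h=h and D="\<lambda>_. 0" and E=E and c=c and C=C, OF m l(1) l(2) nf(1) nf(2) F2 F3 xs(2) xs(1)] by blast
          qed
        qed
      qed
    qed
  next
    assume "mode s = Done" then show ?thesis by simp
  next
    fix l todo rn assume m: "mode s = Exp l todo rn"
    show ?thesis
    proof (cases todo)
      case (Cons v' t)
      then show ?thesis using rme_step.exp_child[where h=h and D="\<lambda>_. 0" and E=E and c=c and C=C and vd=vd and M=M, OF m[unfolded Cons] refl refl refl] by blast
    next
      case Nil
      show ?thesis
      proof (cases rn)
        case None
        have "mode s = Exp l [] None" using m Nil None by simp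
        then show ?thesis using rme_step.exp_end_inf[where h=h and D="\<lambda>_. 0" and E=E and c=c and C=C and vd=vd and M=M] by blast
      next
        case (Some r)
        have "mode s = Exp l [] (Some r)" using m Nil Some by simp
        then show ?thesis using rme_step.exp_end_reinsert[where h=h and D="\<lambda>_. 0" and E=E and c=c and C=C and vd=vd and M=M] by blast
      qed
    qed
  qed
qed

end

theorem theorem1:
  fixes V :: "'v set" and E :: "('v \<times> 'v) set" and c :: "'v \<Rightarrow> 'v \<Rightarrow> nat \<Rightarrow> real"
    and h :: "'v \<Rightarrow> nat \<Rightarrow> real" and vs vd :: 'v and M :: nat and C :: "nat \<Rightarrow> real"
  assumes "finite V" and "E \<subseteq> V \<times> V" and "vs \<in> V" and "vd \<in> V"
    and "0 < M"
    and "\<forall>(u, w)\<in>E. \<forall>i<M. 0 \<le> c u w i"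
    and "consistent_heuristic V E c M vd h"
    and "\<forall>i<M. 0 \<le> C i"
  shows "rme_always_terminates E c h vs vd M C (\<lambda>_. 0) \<and>
         (\<forall>s. (rme_step E c h vd M C (\<lambda>_. 0))\<^sup>*\<^sup>* (rme_init h vs) s \<and> mode s = Done \<longrightarrow>
              max_cost_unique_pareto_set E c M vs vd (result_paths s))"
proof -
  interpret rme V E c h vs vd M C using assms by unfold_locales
  have T: "rme_always_terminates E c h vs vd M C (\<lambda>_. 0)"
    unfolding rme_always_terminates_def
  proof (intro conjI allI impI notI)
    fix s assume "(rme_step E c h vd M C (\<lambda>_. 0))\<^sup>*\<^sup>* (rme_init h vs) s"
    then show "mode s = Done \<or> (\<exists>s'. rme_step E c h vd M C (\<lambda>_. 0) s s')" using progress reach_Inv by blast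
  next
    assume "\<exists>f. f 0 = rme_init h vs \<and> (\<forall>n. rme_step E c h vd M C (\<lambda>_. 0) (f n) (f (Suc n)))"
    then obtain f where f0: "f 0 = rme_init h vs" and fs: "\<forall>n. rme_step E c h vd M C (\<lambda>_. 0) (f n) (f (Suc n))" by blast
    have r: "(rme_step E c h vd M C (\<lambda>_. 0))\<^sup>*\<^sup>* (rme_init h vs) (f n)" for n
    proof (induction n)
      case 0 then show ?case using f0 by simp
    next
      case (Suc n) then show ?case using fs by (meson rtranclp.rtrancl_into_rtrancl)
    qed
    have "\<forall>n. (f (Suc n), f n) \<in> measures ms" using step_dec fs reach_Inv[OF r] by blast
    then show False using wf_measures[of ms] unfolding wf_iff_no_infinite_down_chain by blast
  qed
  show ?thesis using T result_correct reach_Inv by blast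
qed

end
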